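(* Consider the equation $$u_t+u_{xxxxx}+B(t)u_{xxx}+uu_{xxx}+E(t)uu_x+F\,u_xu_{xx}+Q(t)u=0 \qquad (2)$$ where $F$ is a nonzero constant and $B,E,Q$ are smooth functions of $t$. Then a vector field $\mathbf v=\tau\partial_t+\xi\partial_x+\eta\partial_u$ generates a Lie point symmetry group of (2) if and only if $$\tau=k_2t+k_3,\qquad \xi=\tfrac{k_2}{5}x+\delta(t),\qquad \eta=\sigma(t)-\tfrac{2k_2}{5}u$$ for constants $k_2,k_3$ and smooth functions $\delta(t),\sigma(t)$ satisfying $$5(k_2t+k_3)B_t+2k_2B+5\sigma=0,\quad (k_2t+k_3)E_t+\tfrac{2k_2}{5}E=0,\quad \sigma E-\delta_t=0,\quad \sigma Q+\sigma_t=0,\quad (k_2t+k_3)Q_t+k_2Q=0 .$$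
   Context: Lie point symmetries are determined by Lie's classical infinitesimal invariance criterion: the fifth prolongation of $\mathbf v$ applied to the left-hand side of (2) must vanish on solutions of (2). *)

theory Defs
  imports "HOL-Analysis.Analysis"
begin

definition partial_dir :: "'a::euclidean_space \<Rightarrow> ('a \<Rightarrow> real) \<Rightarrow> 'a \<Rightarrow> real" where
  "partial_dir v f p = deriv (\<lambda>s. f (p + s *\<^sub>R v)) 0"

fun iter_partials :: "'a::euclidean_space list \<Rightarrow> ('a \<Rightarrow> real) \<Rightarrow> 'a \<Rightarrow> real" where
  "iter_partials [] f = f"
| "iter_partials (v # vs) f = partial_dir v (iter_partials vs f)"

definition smooth_fun :: "('a::euclidean_space \<Rightarrow> real) \<Rightarrow> bool" where
  "smooth_fun f \<longleftrightarrow> (\<forall>vs. set vs \<subseteq> Basis \<longrightarrow> (\<forall>p. iter_partials vs f differentiable (at p)))"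

definition pt :: "(real \<times> real \<Rightarrow> real) \<Rightarrow> real \<times> real \<Rightarrow> real" where
  "pt = partial_dir (1, 0)"

definition px :: "(real \<times> real \<Rightarrow> real) \<Rightarrow> real \<times> real \<Rightarrow> real" where
  "px = partial_dir (0, 1)"

definition pxn :: "nat \<Rightarrow> (real \<times> real \<Rightarrow> real) \<Rightarrow> real \<times> real \<Rightarrow> real" where
  "pxn n = iter_partials (replicate n (0, 1))"

definition along :: "(real \<times> real \<times> real \<Rightarrow> real) \<Rightarrow> (real \<times> real \<Rightarrow> real) \<Rightarrow> real \<times> real \<Rightarrow> real" where
  "along g U p = g (fst p, snd p, U p)"

definition char_fn ::
  "(real \<times> real \<times> real \<Rightarrow> real) \<Rightarrow> (real \<times> real \<times> real \<Rightarrow> real) \<Rightarrow> (real \<times> real \<times> real \<Rightarrow> real)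
   \<Rightarrow> (real \<times> real \<Rightarrow> real) \<Rightarrow> real \<times> real \<Rightarrow> real" where
  "char_fn \<tau> \<xi> \<eta> U = (\<lambda>p. along \<eta> U p - along \<tau> U p * pt U p - along \<xi> U p * px U p)"

text \<open>Prolongation coefficient eta^J = D_J W + tau u_{J,t} + xi u_{J,x}; the multi-index J
  is given as a list of the directions (1,0) (for t) and (0,1) (for x).\<close>
definition prol_coeff ::
  "(real \<times> real \<times> real \<Rightarrow> real) \<Rightarrow> (real \<times> real \<times> real \<Rightarrow> real) \<Rightarrow> (real \<times> real \<times> real \<Rightarrow> real)
   \<Rightarrow> (real \<times> real) list \<Rightarrow> (real \<times> real \<Rightarrow> real) \<Rightarrow> real \<times> real \<Rightarrow> real" where
  "prol_coeff \<tau> \<xi> \<eta> J U p =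
     iter_partials J (char_fn \<tau> \<xi> \<eta> U) p
     + along \<tau> U p * pt (iter_partials J U) p + along \<xi> U p * px (iter_partials J U) p"

definition eq2_lhs ::
  "(real \<Rightarrow> real) \<Rightarrow> (real \<Rightarrow> real) \<Rightarrow> real \<Rightarrow> (real \<Rightarrow> real) \<Rightarrow> (real \<times> real \<Rightarrow> real) \<Rightarrow> real \<times> real \<Rightarrow> real" where
  "eq2_lhs B E F Q U p =
     (let t = fst p in
      pt U p + pxn 5 U p + B t * pxn 3 U p + U p * pxn 3 U p + E t * U p * px U p
      + F * px U p * pxn 2 U p + Q t * U p)"

text \<open>pr^(5) v applied to the left-hand side of (2), evaluated at the 5-jet of u at p:
  tau dDelta/dt + xi dDelta/dx + eta dDelta/du + sum_J eta^J dDelta/du_J.\<close>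
definition eq2_prolonged ::
  "(real \<Rightarrow> real) \<Rightarrow> (real \<Rightarrow> real) \<Rightarrow> real \<Rightarrow> (real \<Rightarrow> real)
   \<Rightarrow> (real \<times> real \<times> real \<Rightarrow> real) \<Rightarrow> (real \<times> real \<times> real \<Rightarrow> real) \<Rightarrow> (real \<times> real \<times> real \<Rightarrow> real)
   \<Rightarrow> (real \<times> real \<Rightarrow> real) \<Rightarrow> real \<times> real \<Rightarrow> real" where
  "eq2_prolonged B E F Q \<tau> \<xi> \<eta> U p =
     (let t = fst p; u = U p; ux = px U p; uxx = pxn 2 U p; uxxx = pxn 3 U p;
          eJ = (\<lambda>J. prol_coeff \<tau> \<xi> \<eta> J U p) in
      along \<tau> U p * (deriv B t * uxxx + deriv E t * u * ux + deriv Q t * u)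
      + along \<xi> U p * 0
      + along \<eta> U p * (uxxx + E t * ux + Q t)
      + eJ [(1, 0)]
      + eJ (replicate 5 (0, 1))
      + (B t + u) * eJ (replicate 3 (0, 1))
      + (E t * u + F * uxx) * eJ [(0, 1)]
      + F * ux * eJ (replicate 2 (0, 1)))"

text \<open>Lie's infinitesimal invariance criterion: pr^(5) v (Delta) vanishes at every 5-jet
  lying on Delta = 0. Every 5-jet is the jet of a smooth (indeed polynomial) u at a point,
  so we quantify over smooth u and points p where Delta[u](p) = 0.\<close>
definition lie_symmetry_eq2 ::
  "(real \<Rightarrow> real) \<Rightarrow> (real \<Rightarrow> real) \<Rightarrow> real \<Rightarrow> (real \<Rightarrow> real)
   \<Rightarrow> (real \<times> real \<times> real \<Rightarrow> real) \<Rightarrow> (real \<times> real \<times> real \<Rightarrow> real) \<Rightarrow> (real \<times> real \<times> real \<Rightarrow> real) \<Rightarrow> bool" where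
  "lie_symmetry_eq2 B E F Q \<tau> \<xi> \<eta> \<longleftrightarrow>
     (\<forall>U. smooth_fun U \<longrightarrow>
        (\<forall>p. eq2_lhs B E F Q U p = 0 \<longrightarrow> eq2_prolonged B E F Q \<tau> \<xi> \<eta> U p = 0))"

end

theory Submission
  imports Defs
begin


lemma fd_linear:
  assumes "f differentiable (at p)"
  shows "linear (frechet_derivative f (at p))"
  using assms frechet_derivative_works has_derivative_linear by blast

lemma pd_has_deriv:
  fixes f :: "'a::euclidean_space \<Rightarrow> real"
  assumes "f differentiable (at (a + s *\<^sub>R v))"
  shows "((\<lambda>s. f (a + s *\<^sub>R v)) has_real_derivative frechet_derivative f (at (a + s *\<^sub>R v)) v) (at s)"
proof -
  let ?F = "frechet_derivative f (at (a + s *\<^sub>R v))"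
  have 1: "(f has_derivative ?F) (at (a + s *\<^sub>R v))" using assms frechet_derivative_works by blast
  have 2: "((\<lambda>s. a + s *\<^sub>R v) has_derivative (\<lambda>h. h *\<^sub>R v)) (at s)"
    by (auto intro!: derivative_eq_intros)
  have 3: "((\<lambda>s. f (a + s *\<^sub>R v)) has_derivative (\<lambda>h. ?F (h *\<^sub>R v))) (at s)"
    using has_derivative_compose[OF 2 1] by simp
  have "(\<lambda>h. ?F (h *\<^sub>R v)) = (*) (?F v)"
    using linear_cmul[OF fd_linear[OF assms]] by (auto simp: mult.commute)
  then show ?thesis using 3 unfolding has_field_derivative_def by simp
qed

lemma pd_frechet:
  fixes f :: "'a::euclidean_space \<Rightarrow> real"
  assumes "f differentiable (at p)"
  shows "partial_dir v f p = frechet_derivative f (at p) v"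
  using pd_has_deriv[of f p 0 v] assms unfolding partial_dir_def
  by (simp add: DERIV_imp_deriv)

lemma pd_line:
  fixes f :: "'a::euclidean_space \<Rightarrow> real"
  assumes "f differentiable (at (a + s *\<^sub>R v))"
  shows "((\<lambda>s. f (a + s *\<^sub>R v)) has_real_derivative partial_dir v f (a + s *\<^sub>R v)) (at s)"
  using pd_has_deriv[OF assms] pd_frechet[OF assms] by simp

lemma deriv_shift0: "deriv (\<lambda>s. g (s + z)) 0 = deriv g (z::real)"
  unfolding deriv_def using DERIV_shift[of g _ 0 z] by simp

lemma pt_eq: "pt f (t, x) = deriv (\<lambda>s. f (s, x)) t"
proof -
  have "pt f (t, x) = deriv (\<lambda>s. (\<lambda>s. f (s, x)) (s + t)) 0"
    unfolding pt_def partial_dir_def by (simp add: add.commute)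
  then show ?thesis using deriv_shift0[of "\<lambda>s. f (s, x)" t] by simp
qed

lemma px_eq: "px f (t, x) = deriv (\<lambda>y. f (t, y)) x"
proof -
  have "px f (t, x) = deriv (\<lambda>s. (\<lambda>y. f (t, y)) (s + x)) 0"
    unfolding px_def partial_dir_def by (simp add: add.commute)
  then show ?thesis using deriv_shift0[of "\<lambda>y. f (t, y)" x] by simp
qed

lemma pxn_Suc: "pxn (Suc k) f = px (pxn k f)"
  unfolding pxn_def px_def by simp

lemma pxn_0[simp]: "pxn 0 f = f"
  unfolding pxn_def by simp

lemma pxn_eq: "pxn k f (t, x) = (deriv ^^ k) (\<lambda>y. f (t, y)) x"
proof (induction k arbitrary: x)
  case 0 then show ?case by simp
next
  case (Suc k)
  have "(\<lambda>y. pxn k f (t, y)) = (deriv ^^ k) (\<lambda>y. f (t, y))" using Suc by auto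
  then show ?case by (simp add: pxn_Suc px_eq)
qed

lemma pd_real: "partial_dir (1::real) f = deriv f"
proof
  fix x
  have "partial_dir (1::real) f x = deriv (\<lambda>s. f (s + x)) 0"
    unfolding partial_dir_def by (simp add: add.commute)
  then show "partial_dir (1::real) f x = deriv f x" by (simp only: deriv_shift0)
qed

lemma iter_partials_append: "iter_partials (vs @ ws) f = iter_partials vs (iter_partials ws f)"
  by (induction vs) auto

definition S1 :: "(real \<Rightarrow> real) \<Rightarrow> bool" where
  "S1 f \<longleftrightarrow> (\<forall>k x. (deriv ^^ k) f differentiable (at x))"

lemma iter_partials_real: "set vs \<subseteq> {1::real} \<Longrightarrow> iter_partials vs f = (deriv ^^ length vs) f"
  by (induction vs) (auto simp: pd_real)

lemma smooth1_iff: "smooth_fun (f :: real \<Rightarrow> real) \<longleftrightarrow> S1 f"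
proof
  assume "smooth_fun f"
  then show "S1 f" unfolding smooth_fun_def S1_def
  proof (intro allI)
    fix k x assume a: "\<forall>vs. set vs \<subseteq> Basis \<longrightarrow> (\<forall>p. iter_partials vs f differentiable at p)"
    have "set (replicate k (1::real)) \<subseteq> Basis" by auto
    then show "(deriv ^^ k) f differentiable at x"
      using a iter_partials_real[of "replicate k 1" f] by auto
  qed
next
  assume "S1 f"
  then show "smooth_fun f" unfolding smooth_fun_def S1_def
    by (simp add: iter_partials_real)
qed

lemma smooth_diff: "smooth_fun f \<Longrightarrow> f differentiable (at p)"
  unfolding smooth_fun_def by (metis empty_subsetI iter_partials.simps(1) list.set(1))

lemma smooth_pd: "smooth_fun f \<Longrightarrow> v \<in> Basis \<Longrightarrow> smooth_fun (partial_dir v f)"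
  unfolding smooth_fun_def
proof (intro allI impI)
  fix vs :: "'a list" and p assume a: "\<forall>vs. set vs \<subseteq> Basis \<longrightarrow> (\<forall>p. iter_partials vs f differentiable at p)"
    "v \<in> Basis" "set vs \<subseteq> Basis"
  have "iter_partials vs (partial_dir v f) = iter_partials (vs @ [v]) f"
    by (simp add: iter_partials_append)
  then show "iter_partials vs (partial_dir v f) differentiable at p" using a by auto
qed

lemma basis3: "((1::real),(0::real),(0::real)) \<in> Basis" "((0::real),(1::real),(0::real)) \<in> Basis"
  "((0::real),(0::real),(1::real)) \<in> Basis"
  by (auto simp: Basis_prod_def zero_prod_def)

lemma basis2: "((1::real),(0::real)) \<in> Basis" "((0::real),(1::real)) \<in> Basis"
  by (auto simp: Basis_prod_def)


lemma pd3_lin: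
  fixes g :: "real \<times> real \<times> real \<Rightarrow> real"
  assumes "g differentiable (at q)"
  shows "frechet_derivative g (at q) (a, b, c) =
     a * partial_dir (1,0,0) g q + b * partial_dir (0,1,0) g q + c * partial_dir (0,0,1) g q"
proof -
  have e: "(a, b, c) = a *\<^sub>R (1,0,0) + b *\<^sub>R (0,1,0) + c *\<^sub>R ((0::real),(0::real),(1::real))"
    by simp
  have l: "linear (frechet_derivative g (at q))" using fd_linear[OF assms] .
  let ?G = "frechet_derivative g (at q)"
  have "?G (a, b, c) = ?G (a *\<^sub>R (1,0,0) + b *\<^sub>R (0,1,0) + c *\<^sub>R ((0::real),(0::real),(1::real)))"
    using e by metis
  also have "\<dots> = a * ?G (1,0,0) + b * ?G (0,1,0) + c * ?G (0,0,1)"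
    by (simp only: linear_add[OF l] linear_cmul[OF l] real_scaleR_def)
  finally show ?thesis using pd_frechet[OF assms] by simp
qed

lemma chain3:
  fixes g :: "real \<times> real \<times> real \<Rightarrow> real"
  assumes "g differentiable (at (h1 x, h2 x, h3 x))"
    and "(h1 has_real_derivative d1) (at x)" "(h2 has_real_derivative d2) (at x)"
    "(h3 has_real_derivative d3) (at x)"
  shows "((\<lambda>x. g (h1 x, h2 x, h3 x)) has_real_derivative
     (partial_dir (1,0,0) g (h1 x, h2 x, h3 x) * d1 + partial_dir (0,1,0) g (h1 x, h2 x, h3 x) * d2
      + partial_dir (0,0,1) g (h1 x, h2 x, h3 x) * d3)) (at x)"
proof -
  let ?q = "(h1 x, h2 x, h3 x)"
  let ?G = "frechet_derivative g (at ?q)"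
  have 1: "(g has_derivative ?G) (at ?q)" using assms(1) frechet_derivative_works by blast
  have 2: "((\<lambda>x. (h1 x, h2 x, h3 x)) has_derivative (\<lambda>r. (d1 * r, d2 * r, d3 * r))) (at x)"
    using assms(2-4) unfolding has_field_derivative_def
    by (intro has_derivative_Pair) auto
  have 3: "((\<lambda>x. g (h1 x, h2 x, h3 x)) has_derivative (\<lambda>r. ?G (d1 * r, d2 * r, d3 * r))) (at x)"
    using has_derivative_compose[OF 2 1] by simp
  have "(\<lambda>r. ?G (d1 * r, d2 * r, d3 * r)) = (*) (?G (d1, d2, d3))"
  proof
    fix r
    have e: "(d1 * r, d2 * r, d3 * r) = r *\<^sub>R (d1, d2, d3)" by (simp add: mult.commute)
    have "?G (d1 * r, d2 * r, d3 * r) = ?G (r *\<^sub>R (d1, d2, d3))" using e by metis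
    also have "\<dots> = r * ?G (d1, d2, d3)"
      by (simp only: linear_cmul[OF fd_linear[OF assms(1)]] real_scaleR_def)
    finally show "?G (d1 * r, d2 * r, d3 * r) = ?G (d1, d2, d3) * r" by simp
  qed
  then have "((\<lambda>x. g (h1 x, h2 x, h3 x)) has_real_derivative ?G (d1, d2, d3)) (at x)"
    using 3 unfolding has_field_derivative_def by simp
  then show ?thesis using pd3_lin[OF assms(1)] by (simp add: mult.commute)
qed

definition comp3 :: "(real \<times> real \<times> real \<Rightarrow> real) \<Rightarrow> (real \<Rightarrow> real) \<Rightarrow> (real \<Rightarrow> real)
   \<Rightarrow> (real \<Rightarrow> real) \<Rightarrow> real \<Rightarrow> real" where
  "comp3 g h1 h2 h3 = (\<lambda>x. g (h1 x, h2 x, h3 x))"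

definition D1 :: "(real \<Rightarrow> real) \<Rightarrow> bool" where
  "D1 f \<longleftrightarrow> (\<forall>x. f differentiable (at x))"

lemma D1_deriv: "D1 f \<Longrightarrow> (f has_real_derivative deriv f x) (at x)"
  unfolding D1_def using DERIV_deriv_iff_real_differentiable by blast

lemma D1_I: "(\<And>x. (f has_real_derivative f' x) (at x)) \<Longrightarrow> D1 f"
  unfolding D1_def using real_differentiable_def by blast

lemma deriv_comp3:
  assumes "smooth_fun g" "D1 h1" "D1 h2" "D1 h3"
  shows "deriv (comp3 g h1 h2 h3) = (\<lambda>x. comp3 (partial_dir (1,0,0) g) h1 h2 h3 x * deriv h1 x
     + comp3 (partial_dir (0,1,0) g) h1 h2 h3 x * deriv h2 x
     + comp3 (partial_dir (0,0,1) g) h1 h2 h3 x * deriv h3 x)"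
proof
  fix x
  show "deriv (comp3 g h1 h2 h3) x = comp3 (partial_dir (1,0,0) g) h1 h2 h3 x * deriv h1 x
     + comp3 (partial_dir (0,1,0) g) h1 h2 h3 x * deriv h2 x
     + comp3 (partial_dir (0,0,1) g) h1 h2 h3 x * deriv h3 x"
    unfolding comp3_def
    by (rule DERIV_imp_deriv, rule chain3[OF smooth_diff[OF assms(1)]])
       (use assms D1_deriv in auto)
qed

lemma D1_comp3[simp]: "smooth_fun g \<Longrightarrow> D1 h1 \<Longrightarrow> D1 h2 \<Longrightarrow> D1 h3 \<Longrightarrow> D1 (comp3 g h1 h2 h3)"
  unfolding comp3_def
  by (rule D1_I, rule chain3[OF smooth_diff]) (auto intro: D1_deriv)

lemma smooth_pd3[simp]:
  "smooth_fun g \<Longrightarrow> smooth_fun (partial_dir (1,0,0) (g :: real \<times> real \<times> real \<Rightarrow> real))"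
  "smooth_fun g \<Longrightarrow> smooth_fun (partial_dir (0,1,0) (g :: real \<times> real \<times> real \<Rightarrow> real))"
  "smooth_fun g \<Longrightarrow> smooth_fun (partial_dir (0,0,1) (g :: real \<times> real \<times> real \<Rightarrow> real))"
  using smooth_pd basis3 by blast+

lemma D1_const[simp]: "D1 (\<lambda>x. c)" by (rule D1_I[of _ "\<lambda>x. 0"]) auto
lemma D1_ident[simp]: "D1 (\<lambda>x. x)" by (rule D1_I[of _ "\<lambda>x. 1"]) auto
lemma D1_add[simp]: "D1 f \<Longrightarrow> D1 g \<Longrightarrow> D1 (\<lambda>x. f x + g x)"
  by (rule D1_I) (auto intro!: derivative_eq_intros D1_deriv)
lemma D1_diff[simp]: "D1 f \<Longrightarrow> D1 g \<Longrightarrow> D1 (\<lambda>x. f x - g x)"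
  by (rule D1_I) (auto intro!: derivative_eq_intros D1_deriv)
lemma D1_mult[simp]: "D1 f \<Longrightarrow> D1 g \<Longrightarrow> D1 (\<lambda>x. f x * g x)"
  by (rule D1_I) (auto intro!: derivative_eq_intros D1_deriv)
lemma D1_minus[simp]: "D1 f \<Longrightarrow> D1 (\<lambda>x. - f x)"
  by (rule D1_I) (auto intro!: derivative_eq_intros D1_deriv)

lemma deriv_const[simp]: "deriv (\<lambda>x. c) = (\<lambda>x. 0)" by auto
lemma deriv_ident[simp]: "deriv (\<lambda>x. x) = (\<lambda>x. 1)" by auto
lemma deriv_add[simp]: "D1 f \<Longrightarrow> D1 g \<Longrightarrow> deriv (\<lambda>x. f x + g x) = (\<lambda>x. deriv f x + deriv g x)"
  by (rule ext, rule DERIV_imp_deriv) (auto intro!: derivative_eq_intros D1_deriv)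
lemma deriv_diff[simp]: "D1 f \<Longrightarrow> D1 g \<Longrightarrow> deriv (\<lambda>x. f x - g x) = (\<lambda>x. deriv f x - deriv g x)"
  by (rule ext, rule DERIV_imp_deriv) (auto intro!: derivative_eq_intros D1_deriv)
lemma deriv_mult[simp]: "D1 f \<Longrightarrow> D1 g \<Longrightarrow> deriv (\<lambda>x. f x * g x) = (\<lambda>x. deriv f x * g x + f x * deriv g x)"
  by (rule ext, rule DERIV_imp_deriv) (auto intro!: derivative_eq_intros D1_deriv)
lemma deriv_minus[simp]: "D1 f \<Longrightarrow> deriv (\<lambda>x. - f x) = (\<lambda>x. - deriv f x)"
  by (rule ext, rule DERIV_imp_deriv) (auto intro!: derivative_eq_intros D1_deriv)

lemma S1_D1[simp]: "S1 f \<Longrightarrow> D1 f"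
  unfolding S1_def D1_def by (metis funpow_0)
lemma S1_deriv[simp]: "S1 f \<Longrightarrow> S1 (deriv f)"
  unfolding S1_def by (metis funpow_Suc_right o_apply)


definition pform :: "real \<Rightarrow> (real \<Rightarrow> real) \<Rightarrow> (real \<Rightarrow> real) \<Rightarrow> real \<times> real \<Rightarrow> real" where
  "pform t0 A B = (\<lambda>q. A (snd q) + (fst q - t0) * B (snd q))"

lemma pt_pform: "pt (pform t0 A B) = pform t0 B (\<lambda>_. 0)"
proof
  fix q :: "real \<times> real"
  obtain t x where q: "q = (t, x)" by fastforce
  have "((\<lambda>s. A x + (s - t0) * B x) has_real_derivative B x) (at t)"
    by (auto intro!: derivative_eq_intros)
  then show "pt (pform t0 A B) q = pform t0 B (\<lambda>_. 0) q"
    unfolding q pt_eq pform_def by (simp add: DERIV_imp_deriv)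
qed

lemma px_pform: "D1 A \<Longrightarrow> D1 B \<Longrightarrow> px (pform t0 A B) = pform t0 (deriv A) (deriv B)"
proof
  fix q :: "real \<times> real"
  assume a: "D1 A" "D1 B"
  obtain t x where q: "q = (t, x)" by fastforce
  have "((\<lambda>y. A y + (t - t0) * B y) has_real_derivative deriv A x + (t - t0) * deriv B x) (at x)"
    using a by (auto intro!: derivative_eq_intros D1_deriv)
  then show "px (pform t0 A B) q = pform t0 (deriv A) (deriv B) q"
    unfolding q px_eq pform_def by (simp add: DERIV_imp_deriv)
qed

lemma pxn_pform: "S1 A \<Longrightarrow> S1 B \<Longrightarrow> pxn k (pform t0 A B) = pform t0 ((deriv ^^ k) A) ((deriv ^^ k) B)"
proof (induction k arbitrary: A B)
  case 0 then show ?case by simp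
next
  case (Suc k)
  have "pxn (Suc k) (pform t0 A B) = pxn k (px (pform t0 A B))"
    unfolding pxn_def by (simp add: replicate_append_same[symmetric] iter_partials_append px_def
        del: replicate_append_same)
  also have "\<dots> = pxn k (pform t0 (deriv A) (deriv B))" using Suc.prems by (simp add: px_pform)
  also have "\<dots> = pform t0 ((deriv ^^ k) (deriv A)) ((deriv ^^ k) (deriv B))"
    using Suc by simp
  finally show ?case by (simp add: funpow_Suc_right del: funpow.simps)
qed

lemma comp_snd_diff: "D1 A \<Longrightarrow> (\<lambda>q. A (snd q)) differentiable (at (p :: real \<times> real))"
  unfolding D1_def by (rule differentiable_compose[where g=snd and f=A]) (auto intro: bounded_linear_imp_differentiable bounded_linear_snd)

lemma comp_fst_diff: "(\<lambda>q. fst q - t0) differentiable (at (p :: real \<times> real))"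
  by (rule differentiable_diff) (auto intro: bounded_linear_imp_differentiable bounded_linear_fst)

lemma pform_diff: "D1 A \<Longrightarrow> D1 B \<Longrightarrow> pform t0 A B differentiable (at p)"
  unfolding pform_def
  by (intro differentiable_add differentiable_mult comp_snd_diff comp_fst_diff)

lemma S1_zero[simp]: "S1 (\<lambda>_. 0)"
  unfolding S1_def
proof (intro allI)
  fix k x
  have "(deriv ^^ k) (\<lambda>_::real. 0::real) = (\<lambda>_. 0)" by (induction k) auto
  then show "(deriv ^^ k) (\<lambda>_::real. 0::real) differentiable at x" by simp
qed

lemma S1_funpow: "S1 A \<Longrightarrow> S1 ((deriv ^^ k) A)"
proof (induction k)
  case 0 then show ?case by simp
next
  case (Suc k) then show ?case using S1_deriv[of "(deriv ^^ k) A"] by simp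
qed
lemma basis2_eq: "(Basis :: (real \<times> real) set) = {(1,0),(0,1)}"
  by (simp add: Basis_prod_def zero_prod_def insert_commute)
lemma iter_pform: "set vs \<subseteq> Basis \<Longrightarrow> S1 A \<Longrightarrow> S1 B \<Longrightarrow>
  \<exists>A' B'. S1 A' \<and> S1 B' \<and> iter_partials vs (pform t0 A B) = pform t0 A' B'"
proof (induction vs)
  case Nil then show ?case by auto
next
  case (Cons v vs)
  then obtain A' B' where ab: "S1 A'" "S1 B'" "iter_partials vs (pform t0 A B) = pform t0 A' B'"
    by auto
  have v: "v = (1,0) \<or> v = (0,1)" using Cons.prems(1) basis2_eq by auto
  then show ?case
  proof
    assume "v = (1,0)"
    then have "iter_partials (v # vs) (pform t0 A B) = pform t0 B' (\<lambda>_. 0)"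
      using ab(3) pt_pform[of t0 A' B'] unfolding pt_def by simp
    then show ?case using ab S1_zero by (intro exI[of _ B'] exI[of _ "\<lambda>_. 0"]) simp
  next
    assume "v = (0,1)"
    then have "iter_partials (v # vs) (pform t0 A B) = pform t0 (deriv A') (deriv B')"
      using ab px_pform[of A' B' t0] unfolding px_def by simp
    then show ?case using ab by (intro exI[of _ "deriv A'"] exI[of _ "deriv B'"]) simp
  qed
qed

lemma smooth_pform: "S1 A \<Longrightarrow> S1 B \<Longrightarrow> smooth_fun (pform t0 A B)"
  unfolding smooth_fun_def
proof (intro allI impI)
  fix vs :: "(real \<times> real) list" and p
  assume "S1 A" "S1 B" "set vs \<subseteq> Basis"
  then obtain A' B' where "S1 A'" "S1 B'" "iter_partials vs (pform t0 A B) = pform t0 A' B'"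
    using iter_pform by blast
  then show "iter_partials vs (pform t0 A B) differentiable at p" using pform_diff by simp
qed


lemma schwarz_step:
  fixes f :: "'a::euclidean_space \<Rightarrow> real"
  assumes df: "\<And>q. f differentiable (at q)" and dv: "\<And>q. partial_dir v f differentiable (at q)"
    and h: "h > 0"
  shows "\<exists>s r. 0 < s \<and> s < h \<and> 0 < r \<and> r < h \<and>
     f (p + h *\<^sub>R w + h *\<^sub>R v) - f (p + h *\<^sub>R v) - f (p + h *\<^sub>R w) + f p
       = h * h * partial_dir w (partial_dir v f) (p + s *\<^sub>R v + r *\<^sub>R w)"
proof -
  let ?g = "\<lambda>s. f (p + h *\<^sub>R w + s *\<^sub>R v) - f (p + s *\<^sub>R v)"
  define G where "G = (\<lambda>s. partial_dir v f (p + h *\<^sub>R w + s *\<^sub>R v) - partial_dir v f (p + s *\<^sub>R v))"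
  have dg: "\<And>s. (?g has_real_derivative G s) (at s)"
    unfolding G_def by (intro DERIV_diff pd_line df)
  have "\<exists>z>0. z < h \<and> ?g h - ?g 0 = (h - 0) * G z" by (rule MVT2) (use h dg in auto)
  then obtain s where s: "0 < s" "s < h" "?g h - ?g 0 = (h - 0) * G s" by blast
  let ?k = "\<lambda>r. partial_dir v f ((p + s *\<^sub>R v) + r *\<^sub>R w)"
  define K where "K = (\<lambda>r. partial_dir w (partial_dir v f) ((p + s *\<^sub>R v) + r *\<^sub>R w))"
  have dk: "\<And>r. (?k has_real_derivative K r) (at r)"
    unfolding K_def by (intro pd_line dv)
  have "\<exists>z>0. z < h \<and> ?k h - ?k 0 = (h - 0) * K z" by (rule MVT2) (use h dk in auto)
  then obtain r where r: "0 < r" "r < h" "?k h - ?k 0 = (h - 0) * K r" by blast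
  have e1: "p + h *\<^sub>R w + s *\<^sub>R v = (p + s *\<^sub>R v) + h *\<^sub>R w" by (simp add: algebra_simps)
  have "f (p + h *\<^sub>R w + h *\<^sub>R v) - f (p + h *\<^sub>R v) - f (p + h *\<^sub>R w) + f p = ?g h - ?g 0"
    by simp
  also have "\<dots> = h * (?k h - ?k 0)" using s(3) e1 unfolding G_def by simp
  also have "\<dots> = h * h * partial_dir w (partial_dir v f) (p + s *\<^sub>R v + r *\<^sub>R w)" using r(3) unfolding K_def by simp
  finally show ?thesis using s r by blast
qed

lemma schwarz_gen:
  fixes f :: "'a::euclidean_space \<Rightarrow> real"
  assumes df: "\<And>q. f differentiable (at q)" and dv: "\<And>q. partial_dir v f differentiable (at q)"
    and dw: "\<And>q. partial_dir w f differentiable (at q)"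
    and cA: "isCont (partial_dir w (partial_dir v f)) p"
    and cB: "isCont (partial_dir v (partial_dir w f)) p"
  shows "partial_dir w (partial_dir v f) p = partial_dir v (partial_dir w f) p"
proof -
  let ?A = "partial_dir w (partial_dir v f)" and ?B = "partial_dir v (partial_dir w f)"
  let ?M = "norm v + norm w"
  have key: "\<exists>P1 P2. dist P1 p \<le> ?M * h \<and> dist P2 p \<le> ?M * h \<and> ?A P1 = ?B P2" if h: "h > 0" for h
  proof -
    obtain s r where sr: "0 < s" "s < h" "0 < r" "r < h"
      "f (p + h *\<^sub>R w + h *\<^sub>R v) - f (p + h *\<^sub>R v) - f (p + h *\<^sub>R w) + f p = h * h * ?A (p + s *\<^sub>R v + r *\<^sub>R w)"
      using schwarz_step[OF df dv h] by blast
    obtain s' r' where sr': "0 < s'" "s' < h" "0 < r'" "r' < h"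
      "f (p + h *\<^sub>R v + h *\<^sub>R w) - f (p + h *\<^sub>R w) - f (p + h *\<^sub>R v) + f p = h * h * ?B (p + s' *\<^sub>R w + r' *\<^sub>R v)"
      using schwarz_step[OF df dw h, of p v] by blast
    have e: "p + h *\<^sub>R v + h *\<^sub>R w = p + h *\<^sub>R w + h *\<^sub>R v" by (simp add: algebra_simps)
    have "h * h * ?A (p + s *\<^sub>R v + r *\<^sub>R w) = h * h * ?B (p + s' *\<^sub>R w + r' *\<^sub>R v)"
      using sr(5) sr'(5)[unfolded e] by linarith
    then have eq: "?A (p + s *\<^sub>R v + r *\<^sub>R w) = ?B (p + s' *\<^sub>R w + r' *\<^sub>R v)" using h by simp
    have d1: "dist (p + s *\<^sub>R v + r *\<^sub>R w) p \<le> ?M * h"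
    proof -
      have "dist (p + s *\<^sub>R v + r *\<^sub>R w) p = norm (s *\<^sub>R v + r *\<^sub>R w)" by (simp add: dist_norm)
      also have "\<dots> \<le> norm (s *\<^sub>R v) + norm (r *\<^sub>R w)" by (rule norm_triangle_ineq)
      also have "\<dots> = s * norm v + r * norm w" using sr by simp
      also have "\<dots> \<le> h * norm v + h * norm w"
        using sr by (intro add_mono mult_right_mono) auto
      finally show ?thesis by (simp add: distrib_left distrib_right mult.commute)
    qed
    have d2: "dist (p + s' *\<^sub>R w + r' *\<^sub>R v) p \<le> ?M * h"
    proof -
      have "dist (p + s' *\<^sub>R w + r' *\<^sub>R v) p = norm (s' *\<^sub>R w + r' *\<^sub>R v)" by (simp add: dist_norm)
      also have "\<dots> \<le> norm (s' *\<^sub>R w) + norm (r' *\<^sub>R v)" by (rule norm_triangle_ineq)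
      also have "\<dots> = s' * norm w + r' * norm v" using sr' by simp
      also have "\<dots> \<le> h * norm w + h * norm v"
        using sr' by (intro add_mono mult_right_mono) auto
      finally show ?thesis by (simp add: distrib_left distrib_right mult.commute)
    qed
    show ?thesis using eq d1 d2 by blast
  qed
  have "\<forall>n. \<exists>P. dist (fst P) p \<le> ?M * inverse (real (Suc n)) \<and> dist (snd P) p \<le> ?M * inverse (real (Suc n)) \<and> ?A (fst P) = ?B (snd P)"
  proof
    fix n :: nat
    have "(0::real) < inverse (real (Suc n))" by simp
    from key[OF this] obtain P1 P2 where "dist P1 p \<le> ?M * inverse (real (Suc n))" "dist P2 p \<le> ?M * inverse (real (Suc n))" "?A P1 = ?B P2"
      by blast
    then show "\<exists>P. dist (fst P) p \<le> ?M * inverse (real (Suc n)) \<and> dist (snd P) p \<le> ?M * inverse (real (Suc n)) \<and> ?A (fst P) = ?B (snd P)"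
      by (intro exI[of _ "(P1, P2)"]) simp
  qed
  from choice[OF this] obtain PP where PP: "\<forall>n. dist (fst (PP n)) p \<le> ?M * inverse (real (Suc n)) \<and> dist (snd (PP n)) p \<le> ?M * inverse (real (Suc n)) \<and> ?A (fst (PP n)) = ?B (snd (PP n))"
    by blast
  define P1 where "P1 = (\<lambda>n. fst (PP n))"
  define P2 where "P2 = (\<lambda>n. snd (PP n))"
  have P: "\<And>n. dist (P1 n) p \<le> ?M * inverse (real (Suc n))" "\<And>n. dist (P2 n) p \<le> ?M * inverse (real (Suc n))"
    "\<And>n. ?A (P1 n) = ?B (P2 n)" using PP unfolding P1_def P2_def by auto
  have z: "(\<lambda>n. ?M * inverse (real (Suc n))) \<longlonglongrightarrow> 0"
    by (rule tendsto_mult_right_zero[OF LIMSEQ_inverse_real_of_nat])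
  have b1: "\<And>n. norm (dist (P1 n) p) \<le> ?M * inverse (real (Suc n))"
    using P(1) by simp
  have b2: "\<And>n. norm (dist (P2 n) p) \<le> ?M * inverse (real (Suc n))"
    using P(2) by simp
  have "\<forall>\<^sub>F n in sequentially. norm (dist (P1 n) p) \<le> ?M * inverse (real (Suc n))"
    using b1 by (intro always_eventually allI)
  from Lim_null_comparison[OF this z] have t1: "P1 \<longlonglongrightarrow> p"
    by (simp only: tendsto_dist_iff[symmetric])
  have "\<forall>\<^sub>F n in sequentially. norm (dist (P2 n) p) \<le> ?M * inverse (real (Suc n))"
    using b2 by (intro always_eventually allI)
  from Lim_null_comparison[OF this z] have t2: "P2 \<longlonglongrightarrow> p"
    by (simp only: tendsto_dist_iff[symmetric])
  have l1: "(\<lambda>n. ?A (P1 n)) \<longlonglongrightarrow> ?A p" by (rule isCont_tendsto_compose[OF cA t1])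
  have l2: "(\<lambda>n. ?B (P2 n)) \<longlonglongrightarrow> ?B p" by (rule isCont_tendsto_compose[OF cB t2])
  have "(\<lambda>n. ?A (P1 n)) = (\<lambda>n. ?B (P2 n))" using P(3) by simp
  then have "(\<lambda>n. ?A (P1 n)) \<longlonglongrightarrow> ?B p" using l2 by simp
  then show ?thesis using l1 LIMSEQ_unique by blast
qed

lemma schwarz:
  fixes f :: "'a::euclidean_space \<Rightarrow> real"
  assumes "smooth_fun f" "v \<in> Basis" "w \<in> Basis"
  shows "partial_dir w (partial_dir v f) p = partial_dir v (partial_dir w f) p"
proof (rule schwarz_gen)
  have sv: "smooth_fun (partial_dir v f)" and sw: "smooth_fun (partial_dir w f)"
    using assms smooth_pd by auto
  show "\<And>q. f differentiable (at q)" using assms smooth_diff by blast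
  show "\<And>q. partial_dir v f differentiable (at q)" using sv smooth_diff by blast
  show "\<And>q. partial_dir w f differentiable (at q)" using sw smooth_diff by blast
  show "isCont (partial_dir w (partial_dir v f)) p"
    using smooth_diff[OF smooth_pd[OF sv assms(3)]] differentiable_imp_continuous_within[of _ p UNIV] by blast
  show "isCont (partial_dir v (partial_dir w f)) p"
    using smooth_diff[OF smooth_pd[OF sw assms(2)]] differentiable_imp_continuous_within[of _ p UNIV] by blast
qed


lemma funpow_deriv_num:
  "(deriv ^^ 1) f = deriv f" "(deriv ^^ 2) f = deriv (deriv f)" "(deriv ^^ 3) f = deriv (deriv (deriv f))"
  "(deriv ^^ 4) f = deriv (deriv (deriv (deriv f)))"
  "(deriv ^^ 5) f = deriv (deriv (deriv (deriv (deriv f))))"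
  "(deriv ^^ 6) f = deriv (deriv (deriv (deriv (deriv (deriv f)))))"
  by (simp_all add: numeral_eq_Suc)

lemma iter1: "iter_partials [v] f = partial_dir v f" by simp

lemma test_eval:
  fixes \<Phi> \<Psi> :: "real \<Rightarrow> real"
  assumes "S1 \<Phi>" "S1 \<Psi>"
  shows "eq2_prolonged B E F Q \<tau> \<xi> \<eta> (pform t0 \<Phi> \<Psi>) (t0, x0) =
    (let q = (t0, x0, \<Phi> x0); u0 = \<Phi> x0; u1 = deriv \<Phi> x0; u2 = deriv (deriv \<Phi>) x0;
         u3 = deriv (deriv (deriv \<Phi>)) x0;
         ch = (\<lambda>y. comp3 \<eta> (\<lambda>_. t0) (\<lambda>y. y) \<Phi> y - comp3 \<tau> (\<lambda>_. t0) (\<lambda>y. y) \<Phi> y * \<Psi> y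
                     - comp3 \<xi> (\<lambda>_. t0) (\<lambda>y. y) \<Phi> y * deriv \<Phi> y);
         L = (\<lambda>s. \<Phi> x0 + (s - t0) * \<Psi> x0);
         cht = (\<lambda>s. comp3 \<eta> (\<lambda>s. s) (\<lambda>_. x0) L s - comp3 \<tau> (\<lambda>s. s) (\<lambda>_. x0) L s * \<Psi> x0
                     - comp3 \<xi> (\<lambda>s. s) (\<lambda>_. x0) L s * (deriv \<Phi> x0 + (s - t0) * deriv \<Psi> x0))
     in \<tau> q * (deriv B t0 * u3 + deriv E t0 * u0 * u1 + deriv Q t0 * u0)
      + \<xi> q * 0
      + \<eta> q * (u3 + E t0 * u1 + Q t0)
      + (deriv cht t0 + \<tau> q * 0 + \<xi> q * deriv \<Psi> x0)
      + (deriv (deriv (deriv (deriv (deriv ch)))) x0 + \<tau> q * deriv (deriv (deriv (deriv (deriv \<Psi>)))) x0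
          + \<xi> q * deriv (deriv (deriv (deriv (deriv (deriv \<Phi>))))) x0)
      + (B t0 + u0) * (deriv (deriv (deriv ch)) x0 + \<tau> q * deriv (deriv (deriv \<Psi>)) x0
          + \<xi> q * deriv (deriv (deriv (deriv \<Phi>))) x0)
      + (E t0 * u0 + F * u2) * (deriv ch x0 + \<tau> q * deriv \<Psi> x0 + \<xi> q * u2)
      + F * u1 * (deriv (deriv ch) x0 + \<tau> q * deriv (deriv \<Psi>) x0 + \<xi> q * u3))"
proof -
  let ?U = "pform t0 \<Phi> \<Psi>"
  have ptU: "pt ?U = pform t0 \<Psi> (\<lambda>_. 0)" by (rule pt_pform)
  have pxU: "\<And>k. pxn k ?U = pform t0 ((deriv ^^ k) \<Phi>) ((deriv ^^ k) \<Psi>)"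
    using assms pxn_pform by blast
  have pxU1: "px ?U = pform t0 (deriv \<Phi>) (deriv \<Psi>)"
    using px_pform assms by simp
  have ptpxn: "\<And>k. pt (pxn k ?U) = pform t0 ((deriv ^^ k) \<Psi>) (\<lambda>_. 0)"
    using pxU pt_pform by simp
  have ptpt: "pt (pt ?U) = pform t0 (\<lambda>_. 0) (\<lambda>_. 0)" using ptU pt_pform by simp
  have pxpt: "px (pt ?U) = pform t0 (deriv \<Psi>) (deriv (\<lambda>_. 0))" using ptU px_pform assms by simp
  have pxpxn: "\<And>k. px (pxn k ?U) = pxn (Suc k) ?U" by (simp add: pxn_Suc)
  have ch: "(\<lambda>y. char_fn \<tau> \<xi> \<eta> ?U (t0, y)) = (\<lambda>y. comp3 \<eta> (\<lambda>_. t0) (\<lambda>y. y) \<Phi> y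
       - comp3 \<tau> (\<lambda>_. t0) (\<lambda>y. y) \<Phi> y * \<Psi> y - comp3 \<xi> (\<lambda>_. t0) (\<lambda>y. y) \<Phi> y * deriv \<Phi> y)"
    unfolding char_fn_def along_def comp3_def ptU pxU1 by (simp add: pform_def)
  have cht: "(\<lambda>s. char_fn \<tau> \<xi> \<eta> ?U (s, x0)) = (\<lambda>s. comp3 \<eta> (\<lambda>s. s) (\<lambda>_. x0) (\<lambda>s. \<Phi> x0 + (s - t0) * \<Psi> x0) s
       - comp3 \<tau> (\<lambda>s. s) (\<lambda>_. x0) (\<lambda>s. \<Phi> x0 + (s - t0) * \<Psi> x0) s * \<Psi> x0
       - comp3 \<xi> (\<lambda>s. s) (\<lambda>_. x0) (\<lambda>s. \<Phi> x0 + (s - t0) * \<Psi> x0) s * (deriv \<Phi> x0 + (s - t0) * deriv \<Psi> x0))"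
    unfolding char_fn_def along_def comp3_def ptU pxU1 by (simp add: pform_def)
  have J: "iter_partials (replicate k (0,1)) f = pxn k f" for k f by (simp add: pxn_def)
  have rep: "[(0::real, 1::real)] = replicate 1 (0,1)" by simp
  show ?thesis
    unfolding eq2_prolonged_def prol_coeff_def Let_def J rep iter1
    apply (simp only: pt_def[symmetric] px_def[symmetric] ptpt pxpt ptpxn pxpxn pxU pxU1 ptU)
    apply (simp only: pxn_eq pt_eq ch cht)
    apply (simp add: pform_def along_def funpow_deriv_num px_eq)
    done
qed

lemma test_lhs:
  fixes \<Phi> \<Psi> :: "real \<Rightarrow> real"
  assumes "S1 \<Phi>" "S1 \<Psi>"
  shows "eq2_lhs B E F Q (pform t0 \<Phi> \<Psi>) (t0, x0) =
     \<Psi> x0 + deriv (deriv (deriv (deriv (deriv \<Phi>)))) x0 + B t0 * deriv (deriv (deriv \<Phi>)) x0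
     + \<Phi> x0 * deriv (deriv (deriv \<Phi>)) x0 + E t0 * \<Phi> x0 * deriv \<Phi> x0
     + F * deriv \<Phi> x0 * deriv (deriv \<Phi>) x0 + Q t0 * \<Phi> x0"
proof -
  have pxU: "\<And>k. pxn k (pform t0 \<Phi> \<Psi>) = pform t0 ((deriv ^^ k) \<Phi>) ((deriv ^^ k) \<Psi>)"
    using assms pxn_pform by blast
  have pxU1: "px (pform t0 \<Phi> \<Psi>) = pform t0 (deriv \<Phi>) (deriv \<Psi>)"
    using px_pform assms by simp
  show ?thesis unfolding eq2_lhs_def Let_def pxU pxU1 pt_pform
    by (simp add: pform_def funpow_deriv_num)
qed



lemma line_t: "smooth_fun (g :: real \<times> real \<times> real \<Rightarrow> real) \<Longrightarrow> ((\<lambda>t. g (t, x, u)) has_real_derivative partial_dir (1,0,0) g (t, x, u)) (at t)"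
proof -
  assume g: "smooth_fun g"
  have "((\<lambda>t. g (t, x, u)) has_real_derivative (partial_dir (1,0,0) g (t, x, u) * 1 + partial_dir (0,1,0) g (t, x, u) * 0 + partial_dir (0,0,1) g (t, x, u) * 0)) (at t)"
    by (rule chain3) (auto intro!: derivative_eq_intros smooth_diff[OF g])
  then show ?thesis by simp
qed
lemma line_x: "smooth_fun (g :: real \<times> real \<times> real \<Rightarrow> real) \<Longrightarrow> ((\<lambda>x. g (t, x, u)) has_real_derivative partial_dir (0,1,0) g (t, x, u)) (at x)"
proof -
  assume g: "smooth_fun g"
  have "((\<lambda>x. g (t, x, u)) has_real_derivative (partial_dir (1,0,0) g (t, x, u) * 0 + partial_dir (0,1,0) g (t, x, u) * 1 + partial_dir (0,0,1) g (t, x, u) * 0)) (at x)"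
    by (rule chain3) (auto intro!: derivative_eq_intros smooth_diff[OF g])
  then show ?thesis by simp
qed
lemma line_u: "smooth_fun (g :: real \<times> real \<times> real \<Rightarrow> real) \<Longrightarrow> ((\<lambda>u. g (t, x, u)) has_real_derivative partial_dir (0,0,1) g (t, x, u)) (at u)"
proof -
  assume g: "smooth_fun g"
  have "((\<lambda>u. g (t, x, u)) has_real_derivative (partial_dir (1,0,0) g (t, x, u) * 0 + partial_dir (0,1,0) g (t, x, u) * 0 + partial_dir (0,0,1) g (t, x, u) * 1)) (at u)"
    by (rule chain3) (auto intro!: derivative_eq_intros smooth_diff[OF g])
  then show ?thesis by simp
qed

lemma S1_restr3: "smooth_fun (g :: real \<times> real \<times> real \<Rightarrow> real) \<Longrightarrow> S1 (\<lambda>t. g (t, a, b))"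
proof -
  have "\<forall>g. smooth_fun g \<longrightarrow> (deriv ^^ k) (\<lambda>t. g (t, a, b)) differentiable (at t)" for k t
  proof (induction k)
    case 0 then show ?case using line_t real_differentiable_def by fastforce
  next
    case (Suc k)
    show ?case
    proof (intro allI impI)
      fix g :: "real \<times> real \<times> real \<Rightarrow> real" assume g: "smooth_fun g"
      have "deriv (\<lambda>t. g (t, a, b)) = (\<lambda>t. partial_dir (1,0,0) g (t, a, b))"
        using line_t[OF g] DERIV_imp_deriv by blast
      then have "(deriv ^^ Suc k) (\<lambda>t. g (t, a, b)) = (deriv ^^ k) (\<lambda>t. partial_dir (1,0,0) g (t, a, b))"
        by (simp add: funpow_Suc_right del: funpow.simps)
      then show "(deriv ^^ Suc k) (\<lambda>t. g (t, a, b)) differentiable (at t)"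
        using Suc g smooth_pd3 by simp
    qed
  qed
  then show "smooth_fun (g :: real \<times> real \<times> real \<Rightarrow> real) \<Longrightarrow> S1 (\<lambda>t. g (t, a, b))" unfolding S1_def by blast
qed

lemma deriv_restr3: "smooth_fun (g :: real \<times> real \<times> real \<Rightarrow> real) \<Longrightarrow> deriv (\<lambda>t. g (t, a, b)) t = partial_dir (1,0,0) g (t, a, b)"
  using line_t DERIV_imp_deriv by blast

lemma const_x: "smooth_fun (g :: real \<times> real \<times> real \<Rightarrow> real) \<Longrightarrow> (\<And>q. partial_dir (0,1,0) g q = 0) \<Longrightarrow> g (t, x, u) = g (t, y, u)"
  using DERIV_isconst_all[of "\<lambda>x. g (t, x, u)" x y] line_x by metis
lemma const_u: "smooth_fun (g :: real \<times> real \<times> real \<Rightarrow> real) \<Longrightarrow> (\<And>q. partial_dir (0,0,1) g q = 0) \<Longrightarrow> g (t, x, u) = g (t, x, v)"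
  using DERIV_isconst_all[of "\<lambda>u. g (t, x, u)" u v] line_u by metis



lemma comp3_apply: "comp3 g h1 h2 h3 x = g (h1 x, h2 x, h3 x)" by (simp add: comp3_def)

definition Tau :: "(real \<Rightarrow> real) \<Rightarrow> real \<times> real \<times> real \<Rightarrow> real" where
  "Tau T = (\<lambda>q. T (fst q))"
lemma comp3_Tau[simp]: "comp3 (Tau T) h1 h2 h3 = (\<lambda>x. T (h1 x))"
  by (simp add: comp3_def Tau_def)
definition Xi :: "(real \<Rightarrow> real) \<Rightarrow> (real \<Rightarrow> real) \<Rightarrow> real \<times> real \<times> real \<Rightarrow> real" where
  "Xi A D = (\<lambda>q. A (fst q) * fst (snd q) + D (fst q))"
lemma comp3_Xi[simp]: "comp3 (Xi A D) h1 h2 h3 = (\<lambda>x. A (h1 x) * h2 x + D (h1 x))"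
  by (simp add: comp3_def Xi_def)

lemma pd_const[simp]: "partial_dir v (\<lambda>_. c) = (\<lambda>_. 0)"
  unfolding partial_dir_def by auto

lemma sw32: "smooth_fun g \<Longrightarrow> partial_dir (0,0,1) (partial_dir (0,1,0) (g :: real \<times> real \<times> real \<Rightarrow> real))
   = partial_dir (0,1,0) (partial_dir (0,0,1) g)"
  using schwarz basis3 by blast
lemma sw31: "smooth_fun g \<Longrightarrow> partial_dir (0,0,1) (partial_dir (1,0,0) (g :: real \<times> real \<times> real \<Rightarrow> real))
   = partial_dir (1,0,0) (partial_dir (0,0,1) g)"
  using schwarz basis3 by blast
lemma sw21: "smooth_fun g \<Longrightarrow> partial_dir (0,1,0) (partial_dir (1,0,0) (g :: real \<times> real \<times> real \<Rightarrow> real))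
   = partial_dir (1,0,0) (partial_dir (0,1,0) g)"
  using schwarz basis3 by blast

definition Eta :: "(real \<Rightarrow> real) \<Rightarrow> (real \<Rightarrow> real) \<Rightarrow> real \<times> real \<times> real \<Rightarrow> real" where
  "Eta S Al = (\<lambda>q. S (fst q) + Al (fst q) * snd (snd q))"
lemma comp3_Eta[simp]: "comp3 (Eta S Al) h1 h2 h3 = (\<lambda>x. S (h1 x) + Al (h1 x) * h3 x)"
  by (simp add: comp3_def Eta_def)

lemma testA:
  assumes sm: "smooth_fun \<tau>" "smooth_fun \<xi>" "smooth_fun \<eta>"
   and S: "S1 \<Phi>" "S1 \<Psi>0" "S1 \<Psi>1"
   and P: "\<Phi> x0 = u0" "deriv \<Phi> x0 = m" "deriv (deriv \<Phi>) x0 = 0" "deriv (deriv (deriv \<Phi>)) x0 = 0"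
     "deriv (deriv (deriv (deriv \<Phi>))) x0 = 0" "deriv (deriv (deriv (deriv (deriv \<Phi>)))) x0 = 0"
     "deriv (deriv (deriv (deriv (deriv (deriv \<Phi>))))) x0 = 0"
   and Q0: "\<Psi>0 x0 = c" "deriv \<Psi>0 x0 = 0" "deriv (deriv \<Psi>0) x0 = 0" "deriv (deriv (deriv \<Psi>0)) x0 = 0"
     "deriv (deriv (deriv (deriv \<Psi>0))) x0 = 0" "deriv (deriv (deriv (deriv (deriv \<Psi>0)))) x0 = 0"
   and Q1: "\<Psi>1 x0 = c" "deriv \<Psi>1 x0 = 0" "deriv (deriv \<Psi>1) x0 = 0" "deriv (deriv (deriv \<Psi>1)) x0 = 0"
     "deriv (deriv (deriv (deriv \<Psi>1))) x0 = 1" "deriv (deriv (deriv (deriv (deriv \<Psi>1)))) x0 = 0"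
  shows "eq2_prolonged B E F Q \<tau> \<xi> \<eta> (pform t0 \<Phi> \<Psi>1) (t0, x0)
       - eq2_prolonged B E F Q \<tau> \<xi> \<eta> (pform t0 \<Phi> \<Psi>0) (t0, x0)
       = - 5 * (partial_dir (0,1,0) \<tau> (t0, x0, u0) + m * partial_dir (0,0,1) \<tau> (t0, x0, u0))"
  apply (simp only: test_eval[OF S(1,2)] test_eval[OF S(1,3)] Let_def)
  apply (simp add: deriv_comp3 sm S P Q0 Q1)
  apply (simp add: comp3_apply P Q0 Q1 algebra_simps)
  done

lemma testB:
  assumes sm: "smooth_fun \<xi>" "smooth_fun \<eta>" "S1 T"
   and S: "S1 \<Phi>0" "S1 \<Phi>1" "S1 \<Psi>0" "S1 \<Psi>1"
   and P0: "\<Phi>0 x0 = u0" "deriv \<Phi>0 x0 = m" "deriv (deriv \<Phi>0) x0 = 0" "deriv (deriv (deriv \<Phi>0)) x0 = 0"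
     "deriv (deriv (deriv (deriv \<Phi>0))) x0 = 0" "deriv (deriv (deriv (deriv (deriv \<Phi>0)))) x0 = 0"
     "deriv (deriv (deriv (deriv (deriv (deriv \<Phi>0))))) x0 = 0"
   and P1: "\<Phi>1 x0 = u0" "deriv \<Phi>1 x0 = m" "deriv (deriv \<Phi>1) x0 = 0" "deriv (deriv (deriv \<Phi>1)) x0 = 0"
     "deriv (deriv (deriv (deriv \<Phi>1))) x0 = 0" "deriv (deriv (deriv (deriv (deriv \<Phi>1)))) x0 = 1"
     "deriv (deriv (deriv (deriv (deriv (deriv \<Phi>1))))) x0 = 0"
   and Q0: "\<Psi>0 x0 = c" "deriv \<Psi>0 x0 = 0" "deriv (deriv \<Psi>0) x0 = 0" "deriv (deriv (deriv \<Psi>0)) x0 = 0"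
     "deriv (deriv (deriv (deriv \<Psi>0))) x0 = 0" "deriv (deriv (deriv (deriv (deriv \<Psi>0)))) x0 = 0"
   and Q1: "\<Psi>1 x0 = c - 1" "deriv \<Psi>1 x0 = 0" "deriv (deriv \<Psi>1) x0 = 0" "deriv (deriv (deriv \<Psi>1)) x0 = 0"
     "deriv (deriv (deriv (deriv \<Psi>1))) x0 = 0" "deriv (deriv (deriv (deriv (deriv \<Psi>1)))) x0 = 0"
  shows "eq2_prolonged B E F Q (Tau T) \<xi> \<eta> (pform t0 \<Phi>1 \<Psi>1) (t0, x0)
       - eq2_prolonged B E F Q (Tau T) \<xi> \<eta> (pform t0 \<Phi>0 \<Psi>0) (t0, x0)
       = deriv T t0 - 5 * partial_dir (0,1,0) \<xi> (t0, x0, u0) - 5 * m * partial_dir (0,0,1) \<xi> (t0, x0, u0)"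
  apply (simp only: test_eval[OF S(1,3)] test_eval[OF S(2,4)] Let_def)
  apply (simp add: deriv_comp3 sm S P0 P1 Q0 Q1)
  apply (simp add: comp3_apply P0 P1 Q0 Q1 Tau_def algebra_simps)
  done

lemma testE:
  assumes sm: "smooth_fun \<eta>" "S1 T" "S1 A" "S1 D"
   and S: "S1 \<Phi>0" "S1 \<Phi>1" "S1 \<Psi>0"
   and P0: "\<Phi>0 x0 = u0" "deriv \<Phi>0 x0 = m" "deriv (deriv \<Phi>0) x0 = 0" "deriv (deriv (deriv \<Phi>0)) x0 = 0"
     "deriv (deriv (deriv (deriv \<Phi>0))) x0 = 0" "deriv (deriv (deriv (deriv (deriv \<Phi>0)))) x0 = 0"
     "deriv (deriv (deriv (deriv (deriv (deriv \<Phi>0))))) x0 = 0"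
   and P1: "\<Phi>1 x0 = u0" "deriv \<Phi>1 x0 = m" "deriv (deriv \<Phi>1) x0 = 0" "deriv (deriv (deriv \<Phi>1)) x0 = 0"
     "deriv (deriv (deriv (deriv \<Phi>1))) x0 = 1" "deriv (deriv (deriv (deriv (deriv \<Phi>1)))) x0 = 0"
     "deriv (deriv (deriv (deriv (deriv (deriv \<Phi>1))))) x0 = 0"
   and Q0: "\<Psi>0 x0 = c" "deriv \<Psi>0 x0 = 0" "deriv (deriv \<Psi>0) x0 = 0" "deriv (deriv (deriv \<Psi>0)) x0 = 0"
     "deriv (deriv (deriv (deriv \<Psi>0))) x0 = 0" "deriv (deriv (deriv (deriv (deriv \<Psi>0)))) x0 = 0"
  shows "eq2_prolonged B E F Q (Tau T) (Xi A D) \<eta> (pform t0 \<Phi>1 \<Psi>0) (t0, x0)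
       - eq2_prolonged B E F Q (Tau T) (Xi A D) \<eta> (pform t0 \<Phi>0 \<Psi>0) (t0, x0)
       = partial_dir (0,0,1) (partial_dir (0,1,0) \<eta>) (t0, x0, u0)
         + 4 * partial_dir (0,1,0) (partial_dir (0,0,1) \<eta>) (t0, x0, u0)
         + 5 * m * partial_dir (0,0,1) (partial_dir (0,0,1) \<eta>) (t0, x0, u0)"
  apply (simp only: test_eval[OF S(1,3)] test_eval[OF S(2,3)] Let_def)
  apply (simp add: deriv_comp3 sm S P0 P1 Q0)
  apply (simp add: comp3_apply P0 P1 Q0 Xi_def Tau_def algebra_simps)
  done

lemma testC:
  assumes sm: "smooth_fun \<eta>" "S1 T" "S1 A" "S1 D"
   and z: "partial_dir (0,1,0) (partial_dir (0,0,1) \<eta>) = (\<lambda>_. 0)"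
      "partial_dir (0,0,1) (partial_dir (0,0,1) \<eta>) = (\<lambda>_. 0)"
   and S: "S1 \<Phi>0" "S1 \<Phi>1" "S1 \<Psi>0" "S1 \<Psi>1"
   and P0: "\<Phi>0 x0 = u0" "deriv \<Phi>0 x0 = 0" "deriv (deriv \<Phi>0) x0 = 0" "deriv (deriv (deriv \<Phi>0)) x0 = 0"
     "deriv (deriv (deriv (deriv \<Phi>0))) x0 = 0" "deriv (deriv (deriv (deriv (deriv \<Phi>0)))) x0 = 0"
     "deriv (deriv (deriv (deriv (deriv (deriv \<Phi>0))))) x0 = 0"
   and P1: "\<Phi>1 x0 = u0" "deriv \<Phi>1 x0 = 0" "deriv (deriv \<Phi>1) x0 = 0" "deriv (deriv (deriv \<Phi>1)) x0 = 1"
     "deriv (deriv (deriv (deriv \<Phi>1))) x0 = 0" "deriv (deriv (deriv (deriv (deriv \<Phi>1)))) x0 = 0"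
     "deriv (deriv (deriv (deriv (deriv (deriv \<Phi>1))))) x0 = 0"
   and Q0: "\<Psi>0 x0 = c" "deriv \<Psi>0 x0 = 0" "deriv (deriv \<Psi>0) x0 = 0" "deriv (deriv (deriv \<Psi>0)) x0 = 0"
     "deriv (deriv (deriv (deriv \<Psi>0))) x0 = 0" "deriv (deriv (deriv (deriv (deriv \<Psi>0)))) x0 = 0"
   and Q1: "\<Psi>1 x0 = c - (B t0 + u0)" "deriv \<Psi>1 x0 = 0" "deriv (deriv \<Psi>1) x0 = 0" "deriv (deriv (deriv \<Psi>1)) x0 = 0"
     "deriv (deriv (deriv (deriv \<Psi>1))) x0 = 0" "deriv (deriv (deriv (deriv (deriv \<Psi>1)))) x0 = 0"
  shows "eq2_prolonged B E F Q (Tau T) (Xi A D) \<eta> (pform t0 \<Phi>1 \<Psi>1) (t0, x0)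
       - eq2_prolonged B E F Q (Tau T) (Xi A D) \<eta> (pform t0 \<Phi>0 \<Psi>0) (t0, x0)
       = T t0 * deriv B t0 + \<eta> (t0, x0, u0) + (B t0 + u0) * (deriv T t0 - 3 * A t0)"
  apply (simp only: test_eval[OF S(1,3)] test_eval[OF S(2,4)] Let_def)
  apply (simp add: deriv_comp3 sm S P0 P1 Q0 Q1)
  apply (simp add: sw32 sw31 sw21 sm z)
  apply (simp add: comp3_apply P0 P1 Q0 Q1 Xi_def Tau_def algebra_simps)
  done

lemma testD:
  assumes sm: "S1 T" "S1 A" "S1 D" "S1 S" "S1 Al"
   and S: "S1 \<Phi>" "S1 \<Psi>"
   and P: "\<Phi> x0 = u0" "deriv \<Phi> x0 = m" "deriv (deriv \<Phi>) x0 = 0" "deriv (deriv (deriv \<Phi>)) x0 = 0"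
     "deriv (deriv (deriv (deriv \<Phi>))) x0 = 0" "deriv (deriv (deriv (deriv (deriv \<Phi>)))) x0 = 0"
     "deriv (deriv (deriv (deriv (deriv (deriv \<Phi>))))) x0 = 0"
   and Q: "\<Psi> x0 = - (E t0 * u0 * m + Q t0 * u0)" "deriv \<Psi> x0 = 0" "deriv (deriv \<Psi>) x0 = 0" "deriv (deriv (deriv \<Psi>)) x0 = 0"
     "deriv (deriv (deriv (deriv \<Psi>))) x0 = 0" "deriv (deriv (deriv (deriv (deriv \<Psi>)))) x0 = 0"
  shows "eq2_prolonged B E F Q (Tau T) (Xi A D) (Eta S Al) (pform t0 \<Phi> \<Psi>) (t0, x0)
       = (T t0 * deriv E t0 + (deriv T t0 + Al t0 - A t0) * E t0) * u0 * m
         + (S t0 * E t0 - deriv A t0 * x0 - deriv D t0) * m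
         + (T t0 * deriv Q t0 + deriv T t0 * Q t0 + deriv Al t0) * u0 + S t0 * Q t0 + deriv S t0"
  apply (simp only: test_eval[OF S(1,2)] Let_def)
  apply (simp add: sm S P Q)
  apply (simp add: P Q Xi_def Tau_def Eta_def algebra_simps)
  done



lemma smooth_px: "smooth_fun f \<Longrightarrow> smooth_fun (px f)"
  unfolding px_def using smooth_pd basis2 by blast
lemma smooth_pt: "smooth_fun f \<Longrightarrow> smooth_fun (pt f)"
  unfolding pt_def using smooth_pd basis2 by blast
lemma smooth_pxn: "smooth_fun f \<Longrightarrow> smooth_fun (pxn k f)"
  by (induction k) (auto simp: pxn_Suc smooth_px)

lemma sw2: "smooth_fun f \<Longrightarrow> pt (px f) = px (pt f)"
  unfolding pt_def px_def using schwarz basis2 by blast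

lemma pt_pxn: "smooth_fun f \<Longrightarrow> pt (pxn k f) = pxn k (pt f)"
proof (induction k)
  case 0 then show ?case by simp
next
  case (Suc k)
  have "pt (pxn (Suc k) f) = pt (px (pxn k f))" by (simp add: pxn_Suc)
  also have "\<dots> = px (pt (pxn k f))" using sw2 smooth_pxn Suc.prems by blast
  also have "\<dots> = px (pxn k (pt f))" using Suc by simp
  finally show ?case by (simp add: pxn_Suc)
qed

lemma restr_x_diff: "smooth_fun f \<Longrightarrow> (\<lambda>y. f (t, y)) differentiable (at y)"
  by (rule differentiable_compose[where g="\<lambda>y. (t, y)"], rule smooth_diff)
     (auto intro!: derivative_intros)

lemma restr_t_diff: "smooth_fun f \<Longrightarrow> (\<lambda>s. f (s, x)) differentiable (at s)"
  by (rule differentiable_compose[where g="\<lambda>s. (s, x)"], rule smooth_diff)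
     (auto intro!: derivative_intros)

lemma S1_restr_x: "smooth_fun (f :: real \<times> real \<Rightarrow> real) \<Longrightarrow> S1 (\<lambda>y. f (t, y))"
  unfolding S1_def
proof (intro allI)
  fix k y assume "smooth_fun f"
  have "(deriv ^^ k) (\<lambda>y. f (t, y)) = (\<lambda>y. pxn k f (t, y))" by (simp add: pxn_eq)
  then show "(deriv ^^ k) (\<lambda>y. f (t, y)) differentiable at y"
    using restr_x_diff[OF smooth_pxn[OF \<open>smooth_fun f\<close>]] by simp
qed

lemma D1_restr_t: "smooth_fun f \<Longrightarrow> D1 (\<lambda>s. f (s, x))"
  unfolding D1_def using restr_t_diff by blast

lemma deriv_restr_t: "deriv (\<lambda>s. f (s, x)) t = pt f (t, x)"
  by (simp add: pt_eq)

lemma gen_eval: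
  assumes U: "smooth_fun U"
  shows "eq2_prolonged B E F Q \<tau> \<xi> \<eta> U (t0, x0) =
    (let \<Phi> = (\<lambda>y. U (t0, y)); \<Psi> = (\<lambda>y. pt U (t0, y));
         q = (t0, x0, \<Phi> x0); u0 = \<Phi> x0; u1 = deriv \<Phi> x0; u2 = deriv (deriv \<Phi>) x0;
         u3 = deriv (deriv (deriv \<Phi>)) x0;
         ch = (\<lambda>y. comp3 \<eta> (\<lambda>_. t0) (\<lambda>y. y) \<Phi> y - comp3 \<tau> (\<lambda>_. t0) (\<lambda>y. y) \<Phi> y * \<Psi> y
                     - comp3 \<xi> (\<lambda>_. t0) (\<lambda>y. y) \<Phi> y * deriv \<Phi> y);
         Ut = (\<lambda>s. U (s, x0)); Pt = (\<lambda>s. pt U (s, x0)); Xt = (\<lambda>s. px U (s, x0));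
         cht = (\<lambda>s. comp3 \<eta> (\<lambda>s. s) (\<lambda>_. x0) Ut s - comp3 \<tau> (\<lambda>s. s) (\<lambda>_. x0) Ut s * Pt s
                     - comp3 \<xi> (\<lambda>s. s) (\<lambda>_. x0) Ut s * Xt s)
     in \<tau> q * (deriv B t0 * u3 + deriv E t0 * u0 * u1 + deriv Q t0 * u0)
      + \<xi> q * 0
      + \<eta> q * (u3 + E t0 * u1 + Q t0)
      + (deriv cht t0 + \<tau> q * pt (pt U) (t0, x0) + \<xi> q * deriv \<Psi> x0)
      + (deriv (deriv (deriv (deriv (deriv ch)))) x0 + \<tau> q * deriv (deriv (deriv (deriv (deriv \<Psi>)))) x0
          + \<xi> q * deriv (deriv (deriv (deriv (deriv (deriv \<Phi>))))) x0)
      + (B t0 + u0) * (deriv (deriv (deriv ch)) x0 + \<tau> q * deriv (deriv (deriv \<Psi>)) x0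
          + \<xi> q * deriv (deriv (deriv (deriv \<Phi>))) x0)
      + (E t0 * u0 + F * u2) * (deriv ch x0 + \<tau> q * deriv \<Psi> x0 + \<xi> q * u2)
      + F * u1 * (deriv (deriv ch) x0 + \<tau> q * deriv (deriv \<Psi>) x0 + \<xi> q * u3))"
proof -
  have ptpxn: "\<And>k. pt (pxn k U) = pxn k (pt U)" using pt_pxn U by blast
  have pxpt: "px (pt U) = pt (px U)" using sw2 U by simp
  have pxpxn: "\<And>k. px (pxn k U) = pxn (Suc k) U" by (simp add: pxn_Suc)
  have ch: "(\<lambda>y. char_fn \<tau> \<xi> \<eta> U (t0, y)) = (\<lambda>y. comp3 \<eta> (\<lambda>_. t0) (\<lambda>y. y) (\<lambda>y. U (t0, y)) y
       - comp3 \<tau> (\<lambda>_. t0) (\<lambda>y. y) (\<lambda>y. U (t0, y)) y * pt U (t0, y)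
       - comp3 \<xi> (\<lambda>_. t0) (\<lambda>y. y) (\<lambda>y. U (t0, y)) y * deriv (\<lambda>y. U (t0, y)) y)"
    unfolding char_fn_def along_def comp3_def by (simp add: px_eq)
  have cht: "(\<lambda>s. char_fn \<tau> \<xi> \<eta> U (s, x0)) = (\<lambda>s. comp3 \<eta> (\<lambda>s. s) (\<lambda>_. x0) (\<lambda>s. U (s, x0)) s
       - comp3 \<tau> (\<lambda>s. s) (\<lambda>_. x0) (\<lambda>s. U (s, x0)) s * pt U (s, x0)
       - comp3 \<xi> (\<lambda>s. s) (\<lambda>_. x0) (\<lambda>s. U (s, x0)) s * px U (s, x0))"
    unfolding char_fn_def along_def comp3_def by simp
  have J: "iter_partials (replicate k (0,1)) f = pxn k f" for k f by (simp add: pxn_def)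
  have rep: "[(0::real, 1::real)] = replicate 1 (0,1)" by simp
  have pxn1: "pxn 1 f = px f" for f by (simp add: pxn_Suc)
  show ?thesis
    unfolding eq2_prolonged_def prol_coeff_def Let_def J rep iter1
    apply (simp only: pt_def[symmetric] px_def[symmetric] ptpxn pxpxn)
    apply (simp only: pxn_eq pt_eq ch cht)
    apply (simp add: along_def funpow_deriv_num px_eq pxn1 pt_eq)
    done
qed

lemma sw2pt: "smooth_fun U \<Longrightarrow> pt (px U) (t0, x0) = deriv (\<lambda>y. pt U (t0, y)) x0"
  using sw2[of U] by (simp add: px_eq)

lemma back_eval:
  assumes U: "smooth_fun U" and sm: "S1 T" "S1 A" "S1 D" "S1 S" "S1 Al"
   and lhs: "eq2_lhs B E F Q U (t0, x0) = 0"
  shows "eq2_prolonged B E F Q (Tau T) (Xi A D) (Eta S Al) U (t0, x0) =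
    (let \<Phi> = (\<lambda>y. U (t0, y)); u0 = \<Phi> x0; u1 = deriv \<Phi> x0; u2 = deriv (deriv \<Phi>) x0;
         u3 = deriv (deriv (deriv \<Phi>)) x0; u5 = deriv (deriv (deriv (deriv (deriv \<Phi>)))) x0 in
     (deriv T t0 - 5 * A t0) * u5 + (deriv T t0 + Al t0 - 3 * A t0) * (u0 * u3 + F * u1 * u2)
     + (T t0 * deriv B t0 + S t0 + (deriv T t0 - 3 * A t0) * B t0) * u3
     + (T t0 * deriv E t0 + (deriv T t0 + Al t0 - A t0) * E t0) * u0 * u1
     + (S t0 * E t0 - deriv A t0 * x0 - deriv D t0) * u1
     + (T t0 * deriv Q t0 + deriv T t0 * Q t0 + deriv Al t0) * u0 + S t0 * Q t0 + deriv S t0)"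
proof -
  have S1\<Phi>: "S1 (\<lambda>y. U (t0, y))" using S1_restr_x U by blast
  have S1\<Psi>: "S1 (\<lambda>y. pt U (t0, y))" using S1_restr_x smooth_pt U by blast
  have D1s: "D1 (\<lambda>s. U (s, x0))" "D1 (\<lambda>s. pt U (s, x0))" "D1 (\<lambda>s. px U (s, x0))"
    using D1_restr_t U smooth_pt smooth_px by blast+
  have ut: "pt U (t0, x0) = - (deriv (deriv (deriv (deriv (deriv (\<lambda>y. U (t0, y)))))) x0
     + (B t0 + U (t0, x0)) * deriv (deriv (deriv (\<lambda>y. U (t0, y)))) x0
     + E t0 * U (t0, x0) * deriv (\<lambda>y. U (t0, y)) x0
     + F * deriv (\<lambda>y. U (t0, y)) x0 * deriv (deriv (\<lambda>y. U (t0, y))) x0 + Q t0 * U (t0, x0))"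
    using lhs unfolding eq2_lhs_def Let_def
    by (simp add: pxn_eq funpow_deriv_num px_eq algebra_simps)
  show ?thesis
    apply (simp only: gen_eval[OF U] Let_def)
    apply (simp add: sm S1\<Phi> S1\<Psi> D1s)
    apply (simp add: deriv_restr_t sw2pt U)
    apply (simp add: ut Xi_def Tau_def Eta_def px_eq algebra_simps)
    done
qed



definition p6 :: "real \<Rightarrow> real \<Rightarrow> real \<Rightarrow> real \<Rightarrow> real \<Rightarrow> real \<Rightarrow> real \<Rightarrow> real \<Rightarrow> real" where
  "p6 a0 a1 a2 a3 a4 a5 x0 = (\<lambda>x. a0 + a1 * (x - x0) + a2 * (x - x0)^2 + a3 * (x - x0)^3
      + a4 * (x - x0)^4 + a5 * (x - x0)^5)"

lemma deriv_p6: "deriv (p6 a0 a1 a2 a3 a4 a5 x0) = p6 a1 (2 * a2) (3 * a3) (4 * a4) (5 * a5) 0 x0"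
proof
  fix x
  show "deriv (p6 a0 a1 a2 a3 a4 a5 x0) x = p6 a1 (2 * a2) (3 * a3) (4 * a4) (5 * a5) 0 x0 x"
    unfolding p6_def
    by (rule DERIV_imp_deriv) (auto intro!: derivative_eq_intros simp: algebra_simps power2_eq_square power3_eq_cube)
qed

lemma p6_diff: "p6 a0 a1 a2 a3 a4 a5 x0 differentiable (at x)"
  unfolding p6_def by (auto intro!: derivative_intros)

lemma S1_p6: "S1 (p6 a0 a1 a2 a3 a4 a5 x0)"
  unfolding S1_def
proof (intro allI)
  fix k x
  have "\<exists>b0 b1 b2 b3 b4 b5. (deriv ^^ k) (p6 a0 a1 a2 a3 a4 a5 x0) = p6 b0 b1 b2 b3 b4 b5 x0"
  proof (induction k)
    case 0 then show ?case by (intro exI) simp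
  next
    case (Suc k)
    then obtain b0 b1 b2 b3 b4 b5 where "(deriv ^^ k) (p6 a0 a1 a2 a3 a4 a5 x0) = p6 b0 b1 b2 b3 b4 b5 x0" by blast
    then have "(deriv ^^ Suc k) (p6 a0 a1 a2 a3 a4 a5 x0) = p6 b1 (2 * b2) (3 * b3) (4 * b4) (5 * b5) 0 x0"
      by (simp add: deriv_p6)
    then show ?case by blast
  qed
  then show "(deriv ^^ k) (p6 a0 a1 a2 a3 a4 a5 x0) differentiable (at x)" using p6_diff by metis
qed

lemma p6_at: "p6 a0 a1 a2 a3 a4 a5 x0 x0 = a0"
  unfolding p6_def by simp

lemma crit_test:
  assumes "lie_symmetry_eq2 B E F Q \<tau> \<xi> \<eta>" "S1 \<Phi>" "S1 \<Psi>"
    "eq2_lhs B E F Q (pform t0 \<Phi> \<Psi>) (t0, x0) = 0"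
  shows "eq2_prolonged B E F Q \<tau> \<xi> \<eta> (pform t0 \<Phi> \<Psi>) (t0, x0) = 0"
  using assms smooth_pform unfolding lie_symmetry_eq2_def by blast

lemmas pfs = deriv_p6 p6_at S1_p6

lemma stageA:
  assumes L: "lie_symmetry_eq2 B E F Q \<tau> \<xi> \<eta>"
    and sm: "smooth_fun \<tau>" "smooth_fun \<xi>" "smooth_fun \<eta>"
  shows "partial_dir (0,1,0) \<tau> (t, x, u) + m * partial_dir (0,0,1) \<tau> (t, x, u) = 0"
proof -
  define c where "c = - (E t * u * m + Q t * u)"
  have e0: "eq2_prolonged B E F Q \<tau> \<xi> \<eta> (pform t (p6 u m 0 0 0 0 x) (p6 c 0 0 0 0 0 x)) (t, x) = 0"
    by (rule crit_test[OF L]) (simp_all add: test_lhs pfs c_def)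
  have e1: "eq2_prolonged B E F Q \<tau> \<xi> \<eta> (pform t (p6 u m 0 0 0 0 x) (p6 c 0 0 0 (1/24) 0 x)) (t, x) = 0"
    by (rule crit_test[OF L]) (simp_all add: test_lhs pfs c_def)
  have "eq2_prolonged B E F Q \<tau> \<xi> \<eta> (pform t (p6 u m 0 0 0 0 x) (p6 c 0 0 0 (1/24) 0 x)) (t, x)
     - eq2_prolonged B E F Q \<tau> \<xi> \<eta> (pform t (p6 u m 0 0 0 0 x) (p6 c 0 0 0 0 0 x)) (t, x)
     = - 5 * (partial_dir (0,1,0) \<tau> (t, x, u) + m * partial_dir (0,0,1) \<tau> (t, x, u))"
    by (rule testA) (simp_all add: pfs sm)
  then show ?thesis using e0 e1 by simp
qed

lemma stageB:
  assumes L: "lie_symmetry_eq2 B E F Q (Tau T) \<xi> \<eta>"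
    and sm: "smooth_fun \<xi>" "smooth_fun \<eta>" "S1 T"
  shows "deriv T t - 5 * partial_dir (0,1,0) \<xi> (t, x, u) - 5 * m * partial_dir (0,0,1) \<xi> (t, x, u) = 0"
proof -
  define c where "c = - (E t * u * m + Q t * u)"
  have e0: "eq2_prolonged B E F Q (Tau T) \<xi> \<eta> (pform t (p6 u m 0 0 0 0 x) (p6 c 0 0 0 0 0 x)) (t, x) = 0"
    by (rule crit_test[OF L]) (simp_all add: test_lhs pfs c_def)
  have e1: "eq2_prolonged B E F Q (Tau T) \<xi> \<eta> (pform t (p6 u m 0 0 0 (1/120) x) (p6 (c - 1) 0 0 0 0 0 x)) (t, x) = 0"
    by (rule crit_test[OF L]) (simp_all add: test_lhs pfs c_def)
  have "eq2_prolonged B E F Q (Tau T) \<xi> \<eta> (pform t (p6 u m 0 0 0 (1/120) x) (p6 (c - 1) 0 0 0 0 0 x)) (t, x)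
     - eq2_prolonged B E F Q (Tau T) \<xi> \<eta> (pform t (p6 u m 0 0 0 0 x) (p6 c 0 0 0 0 0 x)) (t, x)
     = deriv T t - 5 * partial_dir (0,1,0) \<xi> (t, x, u) - 5 * m * partial_dir (0,0,1) \<xi> (t, x, u)"
    by (rule testB) (simp_all add: pfs sm)
  then show ?thesis using e0 e1 by simp
qed

lemma stageE:
  assumes L: "lie_symmetry_eq2 B E F Q (Tau T) (Xi A D) \<eta>"
    and sm: "smooth_fun \<eta>" "S1 T" "S1 A" "S1 D"
  shows "partial_dir (0,0,1) (partial_dir (0,1,0) \<eta>) (t, x, u)
         + 4 * partial_dir (0,1,0) (partial_dir (0,0,1) \<eta>) (t, x, u)
         + 5 * m * partial_dir (0,0,1) (partial_dir (0,0,1) \<eta>) (t, x, u) = 0"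
proof -
  define c where "c = - (E t * u * m + Q t * u)"
  have e0: "eq2_prolonged B E F Q (Tau T) (Xi A D) \<eta> (pform t (p6 u m 0 0 0 0 x) (p6 c 0 0 0 0 0 x)) (t, x) = 0"
    by (rule crit_test[OF L]) (simp_all add: test_lhs pfs c_def)
  have e1: "eq2_prolonged B E F Q (Tau T) (Xi A D) \<eta> (pform t (p6 u m 0 0 (1/24) 0 x) (p6 c 0 0 0 0 0 x)) (t, x) = 0"
    by (rule crit_test[OF L]) (simp_all add: test_lhs pfs c_def)
  have "eq2_prolonged B E F Q (Tau T) (Xi A D) \<eta> (pform t (p6 u m 0 0 (1/24) 0 x) (p6 c 0 0 0 0 0 x)) (t, x)
     - eq2_prolonged B E F Q (Tau T) (Xi A D) \<eta> (pform t (p6 u m 0 0 0 0 x) (p6 c 0 0 0 0 0 x)) (t, x)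
     = partial_dir (0,0,1) (partial_dir (0,1,0) \<eta>) (t, x, u)
         + 4 * partial_dir (0,1,0) (partial_dir (0,0,1) \<eta>) (t, x, u)
         + 5 * m * partial_dir (0,0,1) (partial_dir (0,0,1) \<eta>) (t, x, u)"
    by (rule testE) (simp_all add: pfs sm)
  then show ?thesis using e0 e1 by simp
qed

lemma stageC:
  assumes L: "lie_symmetry_eq2 B E F Q (Tau T) (Xi A D) \<eta>"
    and sm: "smooth_fun \<eta>" "S1 T" "S1 A" "S1 D"
    and z: "partial_dir (0,1,0) (partial_dir (0,0,1) \<eta>) = (\<lambda>_. 0)"
      "partial_dir (0,0,1) (partial_dir (0,0,1) \<eta>) = (\<lambda>_. 0)"
  shows "T t * deriv B t + \<eta> (t, x, u) + (B t + u) * (deriv T t - 3 * A t) = 0"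
proof -
  define c where "c = - (Q t * u)"
  have e0: "eq2_prolonged B E F Q (Tau T) (Xi A D) \<eta> (pform t (p6 u 0 0 0 0 0 x) (p6 c 0 0 0 0 0 x)) (t, x) = 0"
    by (rule crit_test[OF L]) (simp_all add: test_lhs pfs c_def)
  have e1: "eq2_prolonged B E F Q (Tau T) (Xi A D) \<eta> (pform t (p6 u 0 0 (1/6) 0 0 x) (p6 (c - (B t + u)) 0 0 0 0 0 x)) (t, x) = 0"
    by (rule crit_test[OF L]) (simp_all add: test_lhs pfs c_def algebra_simps)
  have "eq2_prolonged B E F Q (Tau T) (Xi A D) \<eta> (pform t (p6 u 0 0 (1/6) 0 0 x) (p6 (c - (B t + u)) 0 0 0 0 0 x)) (t, x)
     - eq2_prolonged B E F Q (Tau T) (Xi A D) \<eta> (pform t (p6 u 0 0 0 0 0 x) (p6 c 0 0 0 0 0 x)) (t, x)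
     = T t * deriv B t + \<eta> (t, x, u) + (B t + u) * (deriv T t - 3 * A t)"
    by (rule testC) (simp_all add: pfs sm z)
  then show ?thesis using e0 e1 by simp
qed

lemma stageD:
  assumes L: "lie_symmetry_eq2 B E F Q (Tau T) (Xi A D) (Eta S Al)"
    and sm: "S1 T" "S1 A" "S1 D" "S1 S" "S1 Al"
  shows "(T t * deriv E t + (deriv T t + Al t - A t) * E t) * u * m
         + (S t * E t - deriv A t * x - deriv D t) * m
         + (T t * deriv Q t + deriv T t * Q t + deriv Al t) * u + S t * Q t + deriv S t = 0"
proof -
  have e0: "eq2_prolonged B E F Q (Tau T) (Xi A D) (Eta S Al) (pform t (p6 u m 0 0 0 0 x) (p6 (- (E t * u * m + Q t * u)) 0 0 0 0 0 x)) (t, x) = 0"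
    by (rule crit_test[OF L]) (simp_all add: test_lhs pfs)
  have "eq2_prolonged B E F Q (Tau T) (Xi A D) (Eta S Al) (pform t (p6 u m 0 0 0 0 x) (p6 (- (E t * u * m + Q t * u)) 0 0 0 0 0 x)) (t, x)
     = (T t * deriv E t + (deriv T t + Al t - A t) * E t) * u * m
         + (S t * E t - deriv A t * x - deriv D t) * m
         + (T t * deriv Q t + deriv T t * Q t + deriv Al t) * u + S t * Q t + deriv S t"
    by (rule testD) (simp_all add: pfs sm)
  then show ?thesis using e0 by simp
qed

lemma S1_lin: "S1 (\<lambda>t. k2 * t + k3)"
proof -
  have "(\<lambda>t. k2 * t + k3) = p6 k3 k2 0 0 0 0 0" by (auto simp: p6_def algebra_simps)
  then show ?thesis using S1_p6 by metis
qed

lemma S1_const: "S1 (\<lambda>t. c)"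
proof -
  have "(\<lambda>t. c) = p6 c 0 0 0 0 0 0" by (auto simp: p6_def)
  then show ?thesis using S1_p6 by metis
qed

lemma backward:
  assumes sd: "smooth_fun \<delta>" "smooth_fun \<sigma>"
    and forms: "\<forall>t x u. \<tau> (t, x, u) = k2 * t + k3 \<and> \<xi> (t, x, u) = k2 / 5 * x + \<delta> t
              \<and> \<eta> (t, x, u) = \<sigma> t - 2 * k2 / 5 * u"
    and conds: "\<forall>t. 5 * (k2 * t + k3) * deriv B t + 2 * k2 * B t + 5 * \<sigma> t = 0
          \<and> (k2 * t + k3) * deriv E t + 2 * k2 / 5 * E t = 0
          \<and> \<sigma> t * E t - deriv \<delta> t = 0
          \<and> \<sigma> t * Q t + deriv \<sigma> t = 0
          \<and> (k2 * t + k3) * deriv Q t + k2 * Q t = 0"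
  shows "lie_symmetry_eq2 B E F Q \<tau> \<xi> \<eta>"
proof -
  have t: "\<tau> = Tau (\<lambda>t. k2 * t + k3)" using forms by (auto simp: Tau_def)
  have x: "\<xi> = Xi (\<lambda>_. k2 / 5) \<delta>" using forms by (auto simp: Xi_def)
  have e: "\<eta> = Eta \<sigma> (\<lambda>_. - 2 * k2 / 5)" using forms by (auto simp: Eta_def)
  have s1: "S1 \<delta>" "S1 \<sigma>" using sd smooth1_iff by auto
  have dT: "deriv (\<lambda>t. k2 * t + k3) t = k2" for t
    by (rule DERIV_imp_deriv) (auto intro!: derivative_eq_intros)
  show ?thesis unfolding lie_symmetry_eq2_def
  proof (intro allI impI)
    fix U :: "real \<times> real \<Rightarrow> real" and p
    assume U: "smooth_fun U" and lhs: "eq2_lhs B E F Q U p = 0"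
    obtain t0 x0 where p: "p = (t0, x0)" by fastforce
    have lhs0: "eq2_lhs B E F Q U (t0, x0) = 0" using lhs p by simp
    have c: "5 * (k2 * t0 + k3) * deriv B t0 + 2 * k2 * B t0 + 5 * \<sigma> t0 = 0"
          "(k2 * t0 + k3) * deriv E t0 + 2 * k2 / 5 * E t0 = 0"
          "\<sigma> t0 * E t0 - deriv \<delta> t0 = 0"
          "\<sigma> t0 * Q t0 + deriv \<sigma> t0 = 0"
          "(k2 * t0 + k3) * deriv Q t0 + k2 * Q t0 = 0" using conds by auto
    have "eq2_prolonged B E F Q \<tau> \<xi> \<eta> U (t0, x0) =
      (let \<Phi> = (\<lambda>y. U (t0, y)); u0 = \<Phi> x0; u1 = deriv \<Phi> x0; u2 = deriv (deriv \<Phi>) x0;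
         u3 = deriv (deriv (deriv \<Phi>)) x0; u5 = deriv (deriv (deriv (deriv (deriv \<Phi>)))) x0 in
     (k2 - 5 * (k2 / 5)) * u5 + (k2 + (- 2 * k2 / 5) - 3 * (k2 / 5)) * (u0 * u3 + F * u1 * u2)
     + ((k2 * t0 + k3) * deriv B t0 + \<sigma> t0 + (k2 - 3 * (k2 / 5)) * B t0) * u3
     + ((k2 * t0 + k3) * deriv E t0 + (k2 + (- 2 * k2 / 5) - k2 / 5) * E t0) * u0 * u1
     + (\<sigma> t0 * E t0 - 0 * x0 - deriv \<delta> t0) * u1
     + ((k2 * t0 + k3) * deriv Q t0 + k2 * Q t0 + 0) * u0 + \<sigma> t0 * Q t0 + deriv \<sigma> t0)"
      unfolding t x e
      using back_eval[OF U S1_lin[of k2 k3] S1_const[of "k2/5"] s1(1) s1(2) S1_const[of "- 2 * k2 / 5"] lhs0]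
        dT by simp
    also have "\<dots> = 0"
    proof -
      have c1': "(k2 * t0 + k3) * deriv B t0 + \<sigma> t0 + (k2 - 3 * (k2 / 5)) * B t0 = 0"
      proof -
        have "(k2 * t0 + k3) * deriv B t0 + \<sigma> t0 + (k2 - 3 * (k2 / 5)) * B t0
           = (5 * (k2 * t0 + k3) * deriv B t0 + 2 * k2 * B t0 + 5 * \<sigma> t0) / 5"
          by (simp add: field_simps)
        then show ?thesis by (simp only: c(1) div_0)
      qed
      have z1: "k2 - 5 * (k2 / 5) = 0" by simp
      have z2: "k2 + - 2 * k2 / 5 - 3 * (k2 / 5) = 0" by simp
      have z3: "k2 + - 2 * k2 / 5 - k2 / 5 = 2 * k2 / 5" by simp
      show ?thesis unfolding Let_def z1 z2 z3 using c c1' by simp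
    qed
    finally show "eq2_prolonged B E F Q \<tau> \<xi> \<eta> U p = 0" using p by simp
  qed
qed

lemma deriv_zero_const: "(\<And>t. (f has_real_derivative 0) (at t)) \<Longrightarrow> f t = f (0::real)"
  using DERIV_isconst_all by blast

lemma forward:
  assumes sm: "smooth_fun B" "smooth_fun E" "smooth_fun Q"
    "smooth_fun \<tau>" "smooth_fun \<xi>" "smooth_fun \<eta>"
    and L: "lie_symmetry_eq2 B E F Q \<tau> \<xi> \<eta>"
  shows "\<exists>k2 k3 :: real. \<exists>\<delta> \<sigma> :: real \<Rightarrow> real.
       smooth_fun \<delta> \<and> smooth_fun \<sigma> \<and>
       (\<forall>t x u. \<tau> (t, x, u) = k2 * t + k3
              \<and> \<xi> (t, x, u) = k2 / 5 * x + \<delta> t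
              \<and> \<eta> (t, x, u) = \<sigma> t - 2 * k2 / 5 * u) \<and>
       (\<forall>t. 5 * (k2 * t + k3) * deriv B t + 2 * k2 * B t + 5 * \<sigma> t = 0
          \<and> (k2 * t + k3) * deriv E t + 2 * k2 / 5 * E t = 0
          \<and> \<sigma> t * E t - deriv \<delta> t = 0
          \<and> \<sigma> t * Q t + deriv \<sigma> t = 0
          \<and> (k2 * t + k3) * deriv Q t + k2 * Q t = 0)"
proof -
  have tx: "partial_dir (0,1,0) \<tau> q = 0" for q
    using stageA[OF L sm(4-6), of "fst q" "fst (snd q)" "snd (snd q)" 0] by simp
  have tu: "partial_dir (0,0,1) \<tau> q = 0" for q
    using stageA[OF L sm(4-6), of "fst q" "fst (snd q)" "snd (snd q)" 1] tx[of q] by simp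
  define T where "T = (\<lambda>t. \<tau> (t, 0, 0))"
  have ST: "S1 T" unfolding T_def by (rule S1_restr3[OF sm(4)])
  have tauT: "\<tau> = Tau T"
  proof
    fix q :: "real \<times> real \<times> real"
    obtain t x u where q: "q = (t, x, u)" by (cases q) auto
    have "\<tau> (t, x, u) = \<tau> (t, 0, u)" by (rule const_x[OF sm(4) tx])
    also have "\<dots> = \<tau> (t, 0, 0)" by (rule const_u[OF sm(4) tu])
    finally show "\<tau> q = Tau T q" unfolding q Tau_def T_def by simp
  qed
  have L1: "lie_symmetry_eq2 B E F Q (Tau T) \<xi> \<eta>" using L tauT by simp
  have xi_x: "deriv T t = 5 * partial_dir (0,1,0) \<xi> (t, x, u)" for t x u
    using stageB[OF L1 sm(5,6) ST, of t x u 0] by simp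
  have xi_u: "partial_dir (0,0,1) \<xi> q = 0" for q
    using stageB[OF L1 sm(5,6) ST, of "fst q" "fst (snd q)" "snd (snd q)" 1]
      xi_x[of "fst q" "fst (snd q)" "snd (snd q)"] by simp
  define A where "A = (\<lambda>t. partial_dir (0,1,0) \<xi> (t, 0, 0))"
  define D where "D = (\<lambda>t. \<xi> (t, 0, 0))"
  have SA: "S1 A" unfolding A_def by (rule S1_restr3[OF smooth_pd3(2)[OF sm(5)]])
  have SD: "S1 D" unfolding D_def by (rule S1_restr3[OF sm(5)])
  have TA: "deriv T t = 5 * A t" for t using xi_x[of t 0 0] unfolding A_def by simp
  have xiA: "partial_dir (0,1,0) \<xi> (t, x, u) = A t" for t x u using xi_x[of t x u] TA[of t] by simp
  have xiXi: "\<xi> = Xi A D"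
  proof
    fix q :: "real \<times> real \<times> real"
    obtain t x u where q: "q = (t, x, u)" by (cases q) auto
    have d: "((\<lambda>x. \<xi> (t, x, u) - A t * x) has_real_derivative 0) (at x)" for x
    proof -
      have "((\<lambda>x. \<xi> (t, x, u) - A t * x) has_real_derivative (partial_dir (0,1,0) \<xi> (t, x, u) - A t)) (at x)"
        by (intro DERIV_diff line_x[OF sm(5)] DERIV_cmult_Id)
      then show ?thesis using xiA by simp
    qed
    have "\<xi> (t, x, u) - A t * x = \<xi> (t, 0, u) - A t * 0"
      using deriv_zero_const[of "\<lambda>x. \<xi> (t, x, u) - A t * x", OF d] by simp
    also have "\<xi> (t, 0, u) = \<xi> (t, 0, 0)" by (rule const_u[OF sm(5) xi_u])
    finally show "\<xi> q = Xi A D q" unfolding q Xi_def D_def by simp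
  qed
  have L2: "lie_symmetry_eq2 B E F Q (Tau T) (Xi A D) \<eta>" using L1 xiXi by simp
  have sw: "partial_dir (0,0,1) (partial_dir (0,1,0) \<eta>) = partial_dir (0,1,0) (partial_dir (0,0,1) \<eta>)"
    using sw32[OF sm(6)] .
  have z1: "partial_dir (0,1,0) (partial_dir (0,0,1) \<eta>) = (\<lambda>_. 0)"
  proof
    fix q :: "real \<times> real \<times> real"
    obtain t x u where q: "q = (t, x, u)" by (cases q) auto
    show "partial_dir (0,1,0) (partial_dir (0,0,1) \<eta>) q = 0"
      using stageE[OF L2 sm(6) ST SA SD, of t x u 0] sw unfolding q by simp
  qed
  have z2: "partial_dir (0,0,1) (partial_dir (0,0,1) \<eta>) = (\<lambda>_. 0)"
  proof
    fix q :: "real \<times> real \<times> real"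
    obtain t x u where q: "q = (t, x, u)" by (cases q) auto
    show "partial_dir (0,0,1) (partial_dir (0,0,1) \<eta>) q = 0"
      using stageE[OF L2 sm(6) ST SA SD, of t x u 1] sw z1 unfolding q by simp
  qed
  have etaF: "\<eta> (t, x, u) = - (T t * deriv B t) - 2 * A t * B t - 2 * A t * u" for t x u
    using stageC[OF L2 sm(6) ST SA SD z1 z2, of t x u] TA[of t] by (simp add: algebra_simps)
  define S where "S = (\<lambda>t. \<eta> (t, 0, 0))"
  define Al where "Al = (\<lambda>t. - 2 * A t)"
  have SS: "S1 S" unfolding S_def by (rule S1_restr3[OF sm(6)])
  have SAl: "S1 Al"
  proof -
    have "Al = (\<lambda>t. partial_dir (0,0,1) \<eta> (t, 0, 0))"
    proof
      fix t
      have "((\<lambda>u. \<eta> (t, 0, u)) has_real_derivative - 2 * A t) (at 0)"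
        unfolding etaF by (auto intro!: derivative_eq_intros)
      moreover have "((\<lambda>u. \<eta> (t, 0, u)) has_real_derivative partial_dir (0,0,1) \<eta> (t, 0, 0)) (at 0)"
        using line_u[OF sm(6)] .
      ultimately show "Al t = partial_dir (0,0,1) \<eta> (t, 0, 0)" unfolding Al_def using DERIV_unique by blast
    qed
    then show ?thesis using S1_restr3[OF smooth_pd3(3)[OF sm(6)]] by simp
  qed
  have etaEta: "\<eta> = Eta S Al"
  proof
    fix q :: "real \<times> real \<times> real"
    obtain t x u where q: "q = (t, x, u)" by (cases q) auto
    show "\<eta> q = Eta S Al q" unfolding q Eta_def S_def Al_def using etaF[of t x u] etaF[of t 0 0] by simp
  qed
  have L3: "lie_symmetry_eq2 B E F Q (Tau T) (Xi A D) (Eta S Al)" using L2 etaEta by simp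
  have dAl: "deriv Al t = - 2 * deriv A t" for t
    unfolding Al_def by (rule DERIV_imp_deriv) (auto intro!: derivative_eq_intros D1_deriv S1_D1[OF SA])
  have D0: "(T t * deriv E t + (deriv T t + Al t - A t) * E t) * u * m
         + (S t * E t - deriv A t * x - deriv D t) * m
         + (T t * deriv Q t + deriv T t * Q t + deriv Al t) * u + S t * Q t + deriv S t = 0" for t x u m
    by (rule stageD[OF L3 ST SA SD SS SAl])
  have c4: "S t * Q t + deriv S t = 0" for t using D0[where t=t and x=0 and u=0 and m=0] by simp
  have cEx: "S t * E t - deriv A t * x - deriv D t = 0" for t x using D0[where t=t and x=x and u=0 and m=1] c4[of t] by simp
  have dA: "deriv A t = 0" for t using cEx[of t 0] cEx[of t 1] by simp
  have c3: "S t * E t - deriv D t = 0" for t using cEx[of t 0] by simp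
  have c5: "T t * deriv Q t + 5 * A t * Q t = 0" for t
    using D0[where t=t and x=0 and u=1 and m=0] c4[of t] dAl[of t] dA[of t] TA[of t] by simp
  have c2: "T t * deriv E t + 2 * A t * E t = 0" for t
    using D0[where t=t and x=0 and u=1 and m=1] c4[of t] c5[of t] c3[of t] dAl[of t] dA[of t] TA[of t] unfolding Al_def
    by (simp add: algebra_simps)
  define a where "a = A 0"
  have Aa: "A t = a" for t
  proof -
    have "(A has_real_derivative 0) (at t)" for t using D1_deriv[OF S1_D1[OF SA], of t] dA[of t] by simp
    then show ?thesis unfolding a_def using deriv_zero_const[of A] by blast
  qed
  have Tlin: "T t = 5 * a * t + T 0" for t
  proof -
    have "((\<lambda>t. T t - 5 * a * t) has_real_derivative 0) (at t)" for t
    proof -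
      have "((\<lambda>t. T t - 5 * a * t) has_real_derivative (deriv T t - 5 * a)) (at t)"
        by (intro DERIV_diff D1_deriv[OF S1_D1[OF ST]] DERIV_cmult_Id)
      then show ?thesis using TA[of t] Aa[of t] by simp
    qed
    from deriv_zero_const[of "\<lambda>t. T t - 5 * a * t", OF this] have "T t - 5 * a * t = T 0" by simp
    then show ?thesis by linarith
  qed
  have sD: "smooth_fun D" using SD smooth1_iff by blast
  have sS: "smooth_fun S" using SS smooth1_iff by blast
  have r1: "\<forall>t x u. \<tau> (t, x, u) = 5 * a * t + T 0 \<and> \<xi> (t, x, u) = 5 * a / 5 * x + D t
              \<and> \<eta> (t, x, u) = S t - 2 * (5 * a) / 5 * u"
  proof (intro allI conjI)
    fix t x u
    show "\<tau> (t, x, u) = 5 * a * t + T 0" using Tlin[of t] unfolding tauT Tau_def by simp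
    show "\<xi> (t, x, u) = 5 * a / 5 * x + D t" using Aa[of t] unfolding xiXi Xi_def by simp
    show "\<eta> (t, x, u) = S t - 2 * (5 * a) / 5 * u" using Aa[of t] unfolding etaEta Eta_def Al_def by simp
  qed
  have r2: "\<forall>t. 5 * (5 * a * t + T 0) * deriv B t + 2 * (5 * a) * B t + 5 * S t = 0
          \<and> (5 * a * t + T 0) * deriv E t + 2 * (5 * a) / 5 * E t = 0
          \<and> S t * E t - deriv D t = 0
          \<and> S t * Q t + deriv S t = 0
          \<and> (5 * a * t + T 0) * deriv Q t + 5 * a * Q t = 0"
  proof (intro allI conjI)
    fix t
    have st: "S t = - (T t * deriv B t) - 2 * A t * B t" using etaF[of t 0 0] unfolding S_def by simp
    show "5 * (5 * a * t + T 0) * deriv B t + 2 * (5 * a) * B t + 5 * S t = 0"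
      using st Tlin[of t] Aa[of t] by (simp add: algebra_simps)
    show "(5 * a * t + T 0) * deriv E t + 2 * (5 * a) / 5 * E t = 0"
      using c2[of t] Tlin[of t] Aa[of t] by simp
    show "S t * E t - deriv D t = 0" using c3[of t] by simp
    show "S t * Q t + deriv S t = 0" using c4[of t] by simp
    show "(5 * a * t + T 0) * deriv Q t + 5 * a * Q t = 0" using c5[of t] Tlin[of t] Aa[of t] by simp
  qed
  show ?thesis
    apply (rule exI[of _ "5 * a"], rule exI[of _ "T 0"], rule exI[of _ D], rule exI[of _ S])
    using sD sS r1 r2 by blast
qed

theorem mainTheorem5:
  fixes B E Q :: "real \<Rightarrow> real" and F :: real
    and \<tau> \<xi> \<eta> :: "real \<times> real \<times> real \<Rightarrow> real"
  assumes "F \<noteq> 0"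
    and "smooth_fun B" and "smooth_fun E" and "smooth_fun Q"
    and "smooth_fun \<tau>" and "smooth_fun \<xi>" and "smooth_fun \<eta>"
  shows "lie_symmetry_eq2 B E F Q \<tau> \<xi> \<eta> \<longleftrightarrow>
    (\<exists>k2 k3 :: real. \<exists>\<delta> \<sigma> :: real \<Rightarrow> real.
       smooth_fun \<delta> \<and> smooth_fun \<sigma> \<and>
       (\<forall>t x u. \<tau> (t, x, u) = k2 * t + k3
              \<and> \<xi> (t, x, u) = k2 / 5 * x + \<delta> t
              \<and> \<eta> (t, x, u) = \<sigma> t - 2 * k2 / 5 * u) \<and>
       (\<forall>t. 5 * (k2 * t + k3) * deriv B t + 2 * k2 * B t + 5 * \<sigma> t = 0
          \<and> (k2 * t + k3) * deriv E t + 2 * k2 / 5 * E t = 0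
          \<and> \<sigma> t * E t - deriv \<delta> t = 0
          \<and> \<sigma> t * Q t + deriv \<sigma> t = 0
          \<and> (k2 * t + k3) * deriv Q t + k2 * Q t = 0))"
  apply (rule iffI)
   apply (rule forward[OF assms(2-7)], assumption)
  apply (elim exE conjE)
  apply (rule backward; assumption)
  done


end
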